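(* Let $G$ be a finite non-abelian group with center $Z(G)$. Then: (1) if $G/Z(G)\cong\mathbb{Z}_p\times\mathbb{Z}_p$ for a prime $p$, or $G\cong U_{6m}$ ($m\ge2$), then $\Gamma_G$ is integral, L-integral and Q-integral; (2) if $G\cong D_{2m}$ ($m\ge3$), $T_{4m}$ ($m\ge2$), $SD_{8m}$ ($m\ge2$), $U_{(n,m)}$ ($m\ge3,n\ge2$) or $V_{8m}$ ($m\ge2$), then $\Gamma_G$ is L-integral; more generally, if $G/Z(G)\cong D_{2m}$ for some $m\ge3$, then $\Gamma_G$ is L-integral; (3) if $G\cong D_{2m}$, $T_{4m}$, $SD_{8m}$ or $U_{(n,m)}$ ($n\ge2$) with $m\ge3$ odd, then $\Gamma_G$ is Q-integral; (4) if $G\cong D_{2m}$ or $U_{(n,m)}$ ($n\ge2$) with $m$ even and $m/2$ odd, then $\Gamma_G$ is Q-integral.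
   Context: Groups: $D_{2m}=\langle x,y\mid x^m=y^2=1,\ yxy^{-1}=x^{-1}\rangle$; $T_{4m}=\langle x,y\mid x^{2m}=1,\ x^m=y^2,\ y^{-1}xy=x^{-1}\rangle$; $SD_{8m}=\langle x,y\mid x^{4m}=y^2=1,\ yxy=x^{2m-1}\rangle$; $U_{(n,m)}=\langle x,y\mid x^{2n}=y^m=1,\ x^{-1}yx=y^{-1}\rangle$; $U_{6m}=\langle x,y\mid x^{2m}=y^3=1,\ x^{-1}yx=y^{-1}\rangle$; $V_{8m}=\langle x,y\mid x^{2m}=y^4=1,\ yx=x^{-1}y^{-1},\ y^{-1}x=x^{-1}y\rangle$. The NCCC-graph $\Gamma_G$ of a finite non-abelian group $G$ has vertex set $\{x^G: x\in G\setminus Z(G)\}$ ($x^G$ the conjugacy class of $x$), distinct vertices $x^G,y^G$ adjacent iff $x'y'\neq y'x'$ for all $x'\in x^G,y'\in y^G$. With $A$ the adjacency matrix and $D$ the degree matrix, a graph is integral (resp. L-integral, Q-integral) if all eigenvalues of $A$ (resp. $L=D-A$, $Q=D+A$) are integers. *)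

theory Defs
  imports "HOL-Algebra.Algebra" Complex_Main
begin

definition grp_center :: "('a, 'b) monoid_scheme \<Rightarrow> 'a set" where
  "grp_center G = {z \<in> carrier G. \<forall>g \<in> carrier G. z \<otimes>\<^bsub>G\<^esub> g = g \<otimes>\<^bsub>G\<^esub> z}"

definition conj_class :: "('a, 'b) monoid_scheme \<Rightarrow> 'a \<Rightarrow> 'a set" where
  "conj_class G x = {g \<otimes>\<^bsub>G\<^esub> x \<otimes>\<^bsub>G\<^esub> inv\<^bsub>G\<^esub> g | g. g \<in> carrier G}"

definition nccc_vertices :: "('a, 'b) monoid_scheme \<Rightarrow> 'a set set" where
  "nccc_vertices G = conj_class G ` (carrier G - grp_center G)"

definition nccc_adj :: "('a, 'b) monoid_scheme \<Rightarrow> 'a set \<Rightarrow> 'a set \<Rightarrow> bool" where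
  "nccc_adj G A B \<longleftrightarrow> A \<in> nccc_vertices G \<and> B \<in> nccc_vertices G \<and> A \<noteq> B \<and>
     (\<forall>x \<in> A. \<forall>y \<in> B. x \<otimes>\<^bsub>G\<^esub> y \<noteq> y \<otimes>\<^bsub>G\<^esub> x)"

definition adj_matrix :: "'v set \<Rightarrow> ('v \<Rightarrow> 'v \<Rightarrow> bool) \<Rightarrow> 'v \<Rightarrow> 'v \<Rightarrow> complex" where
  "adj_matrix V E i j = (if E i j then 1 else 0)"

definition degree_matrix :: "'v set \<Rightarrow> ('v \<Rightarrow> 'v \<Rightarrow> bool) \<Rightarrow> 'v \<Rightarrow> 'v \<Rightarrow> complex" where
  "degree_matrix V E i j = (if i = j then of_nat (card {k \<in> V. E i k}) else 0)"

definition laplacian_matrix :: "'v set \<Rightarrow> ('v \<Rightarrow> 'v \<Rightarrow> bool) \<Rightarrow> 'v \<Rightarrow> 'v \<Rightarrow> complex" where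
  "laplacian_matrix V E i j = degree_matrix V E i j - adj_matrix V E i j"

definition signless_laplacian_matrix :: "'v set \<Rightarrow> ('v \<Rightarrow> 'v \<Rightarrow> bool) \<Rightarrow> 'v \<Rightarrow> 'v \<Rightarrow> complex" where
  "signless_laplacian_matrix V E i j = degree_matrix V E i j + adj_matrix V E i j"

definition is_eigenvalue :: "'v set \<Rightarrow> ('v \<Rightarrow> 'v \<Rightarrow> complex) \<Rightarrow> complex \<Rightarrow> bool" where
  "is_eigenvalue V M \<mu> \<longleftrightarrow> (\<exists>v :: 'v \<Rightarrow> complex. (\<exists>i \<in> V. v i \<noteq> 0) \<and>
      (\<forall>i \<in> V. (\<Sum>j \<in> V. M i j * v j) = \<mu> * v i))"

definition all_eigenvalues_integral :: "'v set \<Rightarrow> ('v \<Rightarrow> 'v \<Rightarrow> complex) \<Rightarrow> bool" where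
  "all_eigenvalues_integral V M \<longleftrightarrow> (\<forall>\<mu>. is_eigenvalue V M \<mu> \<longrightarrow> \<mu> \<in> \<int>)"

definition graph_integral :: "'v set \<Rightarrow> ('v \<Rightarrow> 'v \<Rightarrow> bool) \<Rightarrow> bool" where
  "graph_integral V E \<longleftrightarrow> all_eigenvalues_integral V (adj_matrix V E)"

definition graph_L_integral :: "'v set \<Rightarrow> ('v \<Rightarrow> 'v \<Rightarrow> bool) \<Rightarrow> bool" where
  "graph_L_integral V E \<longleftrightarrow> all_eigenvalues_integral V (laplacian_matrix V E)"

definition graph_Q_integral :: "'v set \<Rightarrow> ('v \<Rightarrow> 'v \<Rightarrow> bool) \<Rightarrow> bool" where
  "graph_Q_integral V E \<longleftrightarrow> all_eigenvalues_integral V (signless_laplacian_matrix V E)"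

text \<open>G is (isomorphic to) the group presented by generators x, y and relations R:
  G is generated by elements x, y satisfying R, and G has the universal property of the
  presentation: whenever elements a, b of a group H satisfy R there is a homomorphism
  G \<rightarrow> H sending x to a and y to b. Test groups H are taken with carrier in nat; since
  every countable group (in particular every finitely generated one) embeds in such
  an H, this is exactly the universal property. The relations are passed twice, once at
  the type of G and once at the type nat.\<close>
definition presented2 ::
  "('a, 'c) monoid_scheme \<Rightarrow> (('a, 'c) monoid_scheme \<Rightarrow> 'a \<Rightarrow> 'a \<Rightarrow> bool)
     \<Rightarrow> (nat monoid \<Rightarrow> nat \<Rightarrow> nat \<Rightarrow> bool) \<Rightarrow> bool" where
  "presented2 G R RN \<longleftrightarrow> (\<exists>x \<in> carrier G. \<exists>y \<in> carrier G.
      generate G {x, y} = carrier G \<and> R G x y \<and>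
      (\<forall>(H :: nat monoid) a b. group H \<and> a \<in> carrier H \<and> b \<in> carrier H \<and> RN H a b \<longrightarrow>
          (\<exists>h \<in> hom G H. h x = a \<and> h y = b)))"

definition D_rel :: "nat \<Rightarrow> ('a, 'c) monoid_scheme \<Rightarrow> 'a \<Rightarrow> 'a \<Rightarrow> bool" where
  "D_rel m H x y \<longleftrightarrow> x [^]\<^bsub>H\<^esub> m = \<one>\<^bsub>H\<^esub> \<and> y [^]\<^bsub>H\<^esub> (2::nat) = \<one>\<^bsub>H\<^esub> \<and>
     y \<otimes>\<^bsub>H\<^esub> x \<otimes>\<^bsub>H\<^esub> inv\<^bsub>H\<^esub> y = inv\<^bsub>H\<^esub> x"

definition T_rel :: "nat \<Rightarrow> ('a, 'c) monoid_scheme \<Rightarrow> 'a \<Rightarrow> 'a \<Rightarrow> bool" where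
  "T_rel m H x y \<longleftrightarrow> x [^]\<^bsub>H\<^esub> (2 * m) = \<one>\<^bsub>H\<^esub> \<and> x [^]\<^bsub>H\<^esub> m = y [^]\<^bsub>H\<^esub> (2::nat) \<and>
     inv\<^bsub>H\<^esub> y \<otimes>\<^bsub>H\<^esub> x \<otimes>\<^bsub>H\<^esub> y = inv\<^bsub>H\<^esub> x"

definition SD_rel :: "nat \<Rightarrow> ('a, 'c) monoid_scheme \<Rightarrow> 'a \<Rightarrow> 'a \<Rightarrow> bool" where
  "SD_rel m H x y \<longleftrightarrow> x [^]\<^bsub>H\<^esub> (4 * m) = \<one>\<^bsub>H\<^esub> \<and> y [^]\<^bsub>H\<^esub> (2::nat) = \<one>\<^bsub>H\<^esub> \<and>
     y \<otimes>\<^bsub>H\<^esub> x \<otimes>\<^bsub>H\<^esub> y = x [^]\<^bsub>H\<^esub> (2 * m - 1)"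

definition U_rel :: "nat \<Rightarrow> nat \<Rightarrow> ('a, 'c) monoid_scheme \<Rightarrow> 'a \<Rightarrow> 'a \<Rightarrow> bool" where
  "U_rel n m H x y \<longleftrightarrow> x [^]\<^bsub>H\<^esub> (2 * n) = \<one>\<^bsub>H\<^esub> \<and> y [^]\<^bsub>H\<^esub> m = \<one>\<^bsub>H\<^esub> \<and>
     inv\<^bsub>H\<^esub> x \<otimes>\<^bsub>H\<^esub> y \<otimes>\<^bsub>H\<^esub> x = inv\<^bsub>H\<^esub> y"

definition U6_rel :: "nat \<Rightarrow> ('a, 'c) monoid_scheme \<Rightarrow> 'a \<Rightarrow> 'a \<Rightarrow> bool" where
  "U6_rel m H x y \<longleftrightarrow> x [^]\<^bsub>H\<^esub> (2 * m) = \<one>\<^bsub>H\<^esub> \<and> y [^]\<^bsub>H\<^esub> (3::nat) = \<one>\<^bsub>H\<^esub> \<and>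
     inv\<^bsub>H\<^esub> x \<otimes>\<^bsub>H\<^esub> y \<otimes>\<^bsub>H\<^esub> x = inv\<^bsub>H\<^esub> y"

definition V_rel :: "nat \<Rightarrow> ('a, 'c) monoid_scheme \<Rightarrow> 'a \<Rightarrow> 'a \<Rightarrow> bool" where
  "V_rel m H x y \<longleftrightarrow> x [^]\<^bsub>H\<^esub> (2 * m) = \<one>\<^bsub>H\<^esub> \<and> y [^]\<^bsub>H\<^esub> (4::nat) = \<one>\<^bsub>H\<^esub> \<and>
     y \<otimes>\<^bsub>H\<^esub> x = inv\<^bsub>H\<^esub> x \<otimes>\<^bsub>H\<^esub> inv\<^bsub>H\<^esub> y \<and>
     inv\<^bsub>H\<^esub> y \<otimes>\<^bsub>H\<^esub> x = inv\<^bsub>H\<^esub> x \<otimes>\<^bsub>H\<^esub> y"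

definition iso_D :: "('a, 'c) monoid_scheme \<Rightarrow> nat \<Rightarrow> bool" where
  "iso_D G m \<longleftrightarrow> presented2 G (D_rel m) (D_rel m)"
definition iso_T :: "('a, 'c) monoid_scheme \<Rightarrow> nat \<Rightarrow> bool" where
  "iso_T G m \<longleftrightarrow> presented2 G (T_rel m) (T_rel m)"
definition iso_SD :: "('a, 'c) monoid_scheme \<Rightarrow> nat \<Rightarrow> bool" where
  "iso_SD G m \<longleftrightarrow> presented2 G (SD_rel m) (SD_rel m)"
definition iso_U :: "('a, 'c) monoid_scheme \<Rightarrow> nat \<Rightarrow> nat \<Rightarrow> bool" where
  "iso_U G n m \<longleftrightarrow> presented2 G (U_rel n m) (U_rel n m)"
definition iso_U6 :: "('a, 'c) monoid_scheme \<Rightarrow> nat \<Rightarrow> bool" where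
  "iso_U6 G m \<longleftrightarrow> presented2 G (U6_rel m) (U6_rel m)"
definition iso_V :: "('a, 'c) monoid_scheme \<Rightarrow> nat \<Rightarrow> bool" where
  "iso_V G m \<longleftrightarrow> presented2 G (V_rel m) (V_rel m)"

end

theory Submission
  imports Defs
begin

locale mpart =
  fixes V :: "'v set" and R :: "'v \<Rightarrow> 'v \<Rightarrow> bool" and E :: "'v \<Rightarrow> 'v \<Rightarrow> bool"
  assumes finV: "finite V"
    and refl: "\<And>i. i \<in> V \<Longrightarrow> R i i"
    and sym: "\<And>i j. i \<in> V \<Longrightarrow> j \<in> V \<Longrightarrow> R i j \<Longrightarrow> R j i"
    and trans: "\<And>i j k. i \<in> V \<Longrightarrow> j \<in> V \<Longrightarrow> k \<in> V \<Longrightarrow> R i j \<Longrightarrow> R j k \<Longrightarrow> R i k"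
    and E_def: "\<And>i j. E i j \<longleftrightarrow> i \<in> V \<and> j \<in> V \<and> i \<noteq> j \<and> \<not> R i j"
begin

definition P where "P i = {j \<in> V. R i j}"

lemma P_sub: "P i \<subseteq> V" by (auto simp: P_def)
lemma P_fin: "finite (P i)" using finV P_sub finite_subset by blast
lemma P_self: "i \<in> V \<Longrightarrow> i \<in> P i" by (auto simp: P_def refl)
lemma P_eq: "i \<in> V \<Longrightarrow> j \<in> P i \<Longrightarrow> P j = P i"
  unfolding P_def using sym trans by blast

lemma nbrs: "i \<in> V \<Longrightarrow> {k \<in> V. E i k} = V - P i"
  using E_def P_def refl by auto

lemma deg: "i \<in> V \<Longrightarrow> card {k \<in> V. E i k} = card V - card (P i)"
  using nbrs card_Diff_subset P_fin P_sub by metis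

lemma deg_c: "i \<in> V \<Longrightarrow> (of_nat (card {k \<in> V. E i k}) :: complex) = of_nat (card V) - of_nat (card (P i))"
  using deg card_mono[OF finV P_sub] by (simp add: of_nat_diff)

lemma adj_sum: "i \<in> V \<Longrightarrow> (\<Sum>j\<in>V. adj_matrix V E i j * v j) = (\<Sum>j\<in>V. v j) - (\<Sum>j\<in>P i. v j)"
proof -
  assume i: "i \<in> V"
  have "(\<Sum>j\<in>V. adj_matrix V E i j * v j) = (\<Sum>j\<in>V. if j \<in> V - P i then v j else 0)"
    apply (rule sum.cong, simp)
    using nbrs[OF i] by (auto simp: adj_matrix_def)
  also have "\<dots> = (\<Sum>j\<in>V - P i. v j)"
    by (simp add: sum.If_cases finV) (rule sum.cong, auto)
  also have "\<dots> = (\<Sum>j\<in>V. v j) - (\<Sum>j\<in>P i. v j)"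
    using sum_diff[OF finV P_sub] by simp
  finally show ?thesis .
qed

lemma deg_sum: "i \<in> V \<Longrightarrow> (\<Sum>j\<in>V. degree_matrix V E i j * v j) = (of_nat (card V) - of_nat (card (P i))) * v i"
proof -
  assume i: "i \<in> V"
  have "(\<Sum>j\<in>V. degree_matrix V E i j * v j) = (\<Sum>j\<in>V. if j = i then of_nat (card {k \<in> V. E i k}) * v i else 0)"
    by (rule sum.cong) (auto simp: degree_matrix_def)
  also have "\<dots> = of_nat (card {k \<in> V. E i k}) * v i" using i finV by simp
  finally show ?thesis using deg_c[OF i] by simp
qed

lemma L_eq: "i \<in> V \<Longrightarrow> (\<Sum>j\<in>V. laplacian_matrix V E i j * v j) =
   (of_nat (card V) - of_nat (card (P i))) * v i - ((\<Sum>j\<in>V. v j) - (\<Sum>j\<in>P i. v j))"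
  by (simp add: laplacian_matrix_def left_diff_distrib sum_subtractf deg_sum adj_sum)

lemma Q_eq: "i \<in> V \<Longrightarrow> (\<Sum>j\<in>V. signless_laplacian_matrix V E i j * v j) =
   (of_nat (card V) - of_nat (card (P i))) * v i + ((\<Sum>j\<in>V. v j) - (\<Sum>j\<in>P i. v j))"
  by (simp add: signless_laplacian_matrix_def distrib_right sum.distrib deg_sum adj_sum)

lemma const_on_P:
  assumes "i \<in> V" "\<And>j. j \<in> P i \<Longrightarrow> v j = c"
  shows "(\<Sum>j\<in>P i. v j) = of_nat (card (P i)) * c"
  using assms by simp

lemma L_integral: "all_eigenvalues_integral V (laplacian_matrix V E)"
  unfolding all_eigenvalues_integral_def
proof (intro allI impI)
  fix \<mu> assume "is_eigenvalue V (laplacian_matrix V E) \<mu>"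
  then obtain v where nz: "\<exists>i\<in>V. v i \<noteq> 0" and ev: "\<forall>i\<in>V. (\<Sum>j\<in>V. laplacian_matrix V E i j * v j) = \<mu> * v i"
    unfolding is_eigenvalue_def by blast
  define S where "S = (\<Sum>j\<in>V. v j)"
  define n :: complex where "n = of_nat (card V)"
  have eq: "\<mu> * v i = (n - of_nat (card (P i))) * v i - (S - (\<Sum>j\<in>P i. v j))" if "i \<in> V" for i
    using ev that L_eq[OF that, of v] unfolding S_def n_def by simp
  show "\<mu> \<in> \<int>"
  proof (rule ccontr)
    assume nint: "\<mu> \<notin> \<int>"
    have ne: "\<mu> - (n - of_nat k) \<noteq> 0" for k
    proof
      assume "\<mu> - (n - of_nat k) = 0"
      hence "\<mu> = of_int (int (card V) - int k)" by (simp add: n_def)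
      thus False using nint by (metis Ints_of_int)
    qed
    have vi: "v i = (S - (\<Sum>j\<in>P i. v j)) / (n - of_nat (card (P i)) - \<mu>)" if "i \<in> V" for i
    proof -
      have "(n - of_nat (card (P i)) - \<mu>) * v i = S - (\<Sum>j\<in>P i. v j)" using eq[OF that]
        by (simp add: algebra_simps)
      moreover have "n - of_nat (card (P i)) - \<mu> \<noteq> 0" using ne[of "card (P i)"] by (auto simp: algebra_simps)
      ultimately show ?thesis by (simp add: field_simps)
    qed
    have cst: "v j = v i" if "i \<in> V" "j \<in> P i" for i j
      using vi[OF that(1)] vi[of j] P_eq[OF that] P_sub that by auto
    have SP: "(\<Sum>j\<in>P i. v j) = of_nat (card (P i)) * v i" if "i \<in> V" for i
      using cst[OF that] by simp
    have eq2: "(n - \<mu>) * v i = S" if "i \<in> V" for i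
      using eq[OF that] SP[OF that] by (simp add: algebra_simps)
    have "(\<Sum>i\<in>V. (n - \<mu>) * v i) = (\<Sum>i\<in>V. S)" using eq2 by simp
    hence "(n - \<mu>) * S = n * S" by (simp add: sum_distrib_left[symmetric] S_def n_def)
    hence "\<mu> * S = 0" by (simp add: algebra_simps)
    moreover have "\<mu> \<noteq> 0" using nint by auto
    ultimately have "S = 0" by simp
    moreover have "n - \<mu> \<noteq> 0" using ne[of 0] by simp
    ultimately have "v i = 0" if "i \<in> V" for i using eq2[OF that] by simp
    thus False using nz by blast
  qed
qed

lemma Q_integral_2:
  assumes tri: "\<And>i j k. i \<in> V \<Longrightarrow> j \<in> V \<Longrightarrow> k \<in> V \<Longrightarrow> R i j \<or> R j k \<or> R i k"
  shows "all_eigenvalues_integral V (signless_laplacian_matrix V E)"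
  unfolding all_eigenvalues_integral_def
proof (intro allI impI)
  fix \<mu> assume "is_eigenvalue V (signless_laplacian_matrix V E) \<mu>"
  then obtain v where nz: "\<exists>i\<in>V. v i \<noteq> 0" and ev: "\<forall>i\<in>V. (\<Sum>j\<in>V. signless_laplacian_matrix V E i j * v j) = \<mu> * v i"
    unfolding is_eigenvalue_def by blast
  define S where "S = (\<Sum>j\<in>V. v j)"
  define n :: complex where "n = of_nat (card V)"
  have eq: "\<mu> * v i = (n - of_nat (card (P i))) * v i + (S - (\<Sum>j\<in>P i. v j))" if "i \<in> V" for i
    using ev that Q_eq[OF that, of v] unfolding S_def n_def by simp
  show "\<mu> \<in> \<int>"
  proof (rule ccontr)
    assume nint: "\<mu> \<notin> \<int>"
    have ne: "\<mu> - (n - of_nat k) \<noteq> 0" for k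
    proof
      assume "\<mu> - (n - of_nat k) = 0"
      hence "\<mu> = of_int (int (card V) - int k)" by (simp add: n_def)
      thus False using nint by (metis Ints_of_int)
    qed
    have vi: "v i = (S - (\<Sum>j\<in>P i. v j)) / (\<mu> - (n - of_nat (card (P i))))" if "i \<in> V" for i
    proof -
      have "(\<mu> - (n - of_nat (card (P i)))) * v i = S - (\<Sum>j\<in>P i. v j)" using eq[OF that]
        by (simp add: algebra_simps)
      thus ?thesis using ne[of "card (P i)"] by (simp add: field_simps)
    qed
    have cst: "v j = v i" if "i \<in> V" "j \<in> P i" for i j
      using vi[OF that(1)] vi[of j] P_eq[OF that] P_sub that by auto
    obtain i0 where i0: "i0 \<in> V" "v i0 \<noteq> 0" using nz by blast
    define P2 where "P2 = V - P i0"
    have P2R: "R j k" if "j \<in> P2" "k \<in> P2" for j k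
      using tri[of j i0 k] that i0 sym[of j i0] unfolding P2_def P_def by auto
    have P2P: "P j = P2" if "j \<in> P2" for j
    proof
      show "P j \<subseteq> P2" unfolding P2_def P_def using that i0 sym trans unfolding P2_def P_def by blast
      show "P2 \<subseteq> P j" using P2R[OF that] P2_def P_def by auto
    qed
    define a :: complex where "a = of_nat (card (P i0))"
    define b :: complex where "b = of_nat (card P2)"
    have nab: "n = a + b" unfolding n_def a_def b_def P2_def
      using card_Diff_subset[OF P_fin P_sub] card_mono[OF finV P_sub] by (simp add: of_nat_diff)
    have S1: "(\<Sum>j\<in>P i0. v j) = a * v i0" unfolding a_def using cst[OF i0(1)] by simp
    show False
    proof (cases "P2 = {}")
      case True
      hence "b = 0" by (simp add: b_def)
      have "S = (\<Sum>j\<in>P i0. v j)" unfolding S_def using True P2_def P_sub by (metis Diff_eq_empty_iff subset_antisym)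
      hence "\<mu> * v i0 = 0" using eq[OF i0(1)] nab \<open>b = 0\<close> by (simp add: a_def)
      thus False using i0 nint by auto
    next
      case False
      then obtain j0 where j0: "j0 \<in> P2" by blast
      have j0V: "j0 \<in> V" using j0 P2_def by auto
      have S2: "(\<Sum>j\<in>P2. v j) = b * v j0" unfolding b_def using cst[OF j0V] P2P[OF j0] by simp
      have "S = (\<Sum>j\<in>P i0. v j) + (\<Sum>j\<in>P2. v j)" unfolding S_def P2_def
        by (metis P_sub finV sum.subset_diff add.commute)
      hence SS: "S = a * v i0 + b * v j0" using S1 S2 by simp
      have e1: "\<mu> * v i0 = b * (v i0 + v j0)" using eq[OF i0(1)] S1 SS nab by (simp add: a_def algebra_simps)
      have e2: "\<mu> * v j0 = a * (v i0 + v j0)" using eq[OF j0V] P2P[OF j0] S2 SS nab by (simp add: b_def algebra_simps)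
      have "\<mu> * (v i0 + v j0) = n * (v i0 + v j0)" using e1 e2 nab by (simp add: algebra_simps)
      moreover have "\<mu> \<noteq> n" using ne[of 0] by auto
      ultimately have "v i0 + v j0 = 0" by simp
      hence "\<mu> * v i0 = 0" using e1 by simp
      thus False using i0 nint by auto
    qed
  qed
qed

lemma eqparts_aux:
  fixes v :: "'v \<Rightarrow> complex"
  assumes s: "\<And>i. i \<in> V \<Longrightarrow> card (P i) = s"
    and nz: "\<exists>i\<in>V. v i \<noteq> 0" and al: "\<alpha> \<in> \<int>"
    and eq: "\<And>i. i \<in> V \<Longrightarrow> \<mu> * v i = \<alpha> * v i + ((\<Sum>j\<in>V. v j) - (\<Sum>j\<in>P i. v j))"
  shows "\<mu> \<in> \<int>"
proof (rule ccontr)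
  assume nint: "\<mu> \<notin> \<int>"
  define S where "S = (\<Sum>j\<in>V. v j)"
  define n :: complex where "n = of_nat (card V)"
  define l where "l = \<mu> - \<alpha>"
  have lint: "l + of_int k \<noteq> 0" for k
  proof
    assume "l + of_int k = 0"
    hence "\<mu> = \<alpha> - of_int k" by (simp add: l_def algebra_simps)
    thus False using nint al by (metis Ints_diff Ints_of_int)
  qed
  have eq1: "l * v i = S - (\<Sum>j\<in>P i. v j)" if "i \<in> V" for i
    using eq[OF that] by (simp add: l_def S_def algebra_simps)
  have l0: "l \<noteq> 0" using lint[of 0] by simp
  have cst: "v j = v i" if "i \<in> V" "j \<in> P i" for i j
  proof -
    have "j \<in> V" using that P_sub by auto
    hence "l * v j = l * v i" using eq1[OF that(1)] eq1[of j] P_eq[OF that] by simp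
    thus ?thesis using l0 by simp
  qed
  have eq2: "(l + of_nat s) * v i = S" if "i \<in> V" for i
  proof -
    have "(\<Sum>j\<in>P i. v j) = of_nat s * v i" using cst[OF that] s[OF that] by simp
    thus ?thesis using eq1[OF that] by (simp add: algebra_simps)
  qed
  have ls: "l + of_nat s \<noteq> 0" using lint[of "int s"] by simp
  have "(\<Sum>i\<in>V. (l + of_nat s) * v i) = (\<Sum>i\<in>V. S)" using eq2 by simp
  hence "(l + of_nat s) * S = n * S" by (simp add: sum_distrib_left[symmetric] S_def n_def)
  hence "(l + of_nat s - n) * S = 0" by (simp add: algebra_simps)
  moreover have "l + of_nat s - n \<noteq> 0" using lint[of "int s - int (card V)"] by (simp add: n_def algebra_simps)
  ultimately have "S = 0" by simp
  hence "v i = 0" if "i \<in> V" for i using eq2[OF that] ls by simp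
  thus False using nz by blast
qed

lemma A_integral_eq:
  assumes s: "\<And>i. i \<in> V \<Longrightarrow> card (P i) = s"
  shows "all_eigenvalues_integral V (adj_matrix V E)"
  unfolding all_eigenvalues_integral_def
proof (intro allI impI)
  fix \<mu> assume "is_eigenvalue V (adj_matrix V E) \<mu>"
  then obtain v where nz: "\<exists>i\<in>V. v i \<noteq> 0" and ev: "\<forall>i\<in>V. (\<Sum>j\<in>V. adj_matrix V E i j * v j) = \<mu> * v i"
    unfolding is_eigenvalue_def by blast
  show "\<mu> \<in> \<int>"
    by (rule eqparts_aux[OF s nz, of 0]) (use ev adj_sum in auto)
qed

lemma Q_integral_eq:
  assumes s: "\<And>i. i \<in> V \<Longrightarrow> card (P i) = s"
  shows "all_eigenvalues_integral V (signless_laplacian_matrix V E)"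
  unfolding all_eigenvalues_integral_def
proof (intro allI impI)
  fix \<mu> assume "is_eigenvalue V (signless_laplacian_matrix V E) \<mu>"
  then obtain v where nz: "\<exists>i\<in>V. v i \<noteq> 0" and ev: "\<forall>i\<in>V. (\<Sum>j\<in>V. signless_laplacian_matrix V E i j * v j) = \<mu> * v i"
    unfolding is_eigenvalue_def by blast
  show "\<mu> \<in> \<int>"
  proof (rule eqparts_aux[OF s nz, of "of_nat (card V) - of_nat s"])
    show "of_nat (card V) - of_nat s \<in> (\<int> :: complex set)" by simp
    fix i assume i: "i \<in> V"
    show "\<mu> * v i = (of_nat (card V) - of_nat s) * v i + ((\<Sum>j\<in>V. v j) - (\<Sum>j\<in>P i. v j))"
      using ev i Q_eq[OF i, of v] s[OF i] by simp
  qed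
qed

end

definition comm_rel :: "('a, 'b) monoid_scheme \<Rightarrow> 'a set \<Rightarrow> 'a set \<Rightarrow> bool" where
  "comm_rel G A B \<longleftrightarrow> (\<exists>x\<in>A. \<exists>y\<in>B. x \<otimes>\<^bsub>G\<^esub> y = y \<otimes>\<^bsub>G\<^esub> x)"

definition CA :: "('a, 'b) monoid_scheme \<Rightarrow> bool" where
  "CA G \<longleftrightarrow> (\<forall>u \<in> carrier G - grp_center G. \<forall>v \<in> carrier G - grp_center G. \<forall>w \<in> carrier G - grp_center G.
      u \<otimes>\<^bsub>G\<^esub> v = v \<otimes>\<^bsub>G\<^esub> u \<longrightarrow> v \<otimes>\<^bsub>G\<^esub> w = w \<otimes>\<^bsub>G\<^esub> v \<longrightarrow> u \<otimes>\<^bsub>G\<^esub> w = w \<otimes>\<^bsub>G\<^esub> u)"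

context group
begin

lemma inv_cancel_l [simp]: "x \<in> carrier G \<Longrightarrow> y \<in> carrier G \<Longrightarrow> inv x \<otimes> (x \<otimes> y) = y"
  by (simp add: m_assoc[symmetric])
lemma inv_cancel_l2 [simp]: "x \<in> carrier G \<Longrightarrow> y \<in> carrier G \<Longrightarrow> x \<otimes> (inv x \<otimes> y) = y"
  by (simp add: m_assoc[symmetric])

lemma center_sub: "grp_center G \<subseteq> carrier G" by (auto simp: grp_center_def)
lemma centerD: "z \<in> grp_center G \<Longrightarrow> g \<in> carrier G \<Longrightarrow> z \<otimes> g = g \<otimes> z" by (auto simp: grp_center_def)
lemma centerI: "z \<in> carrier G \<Longrightarrow> (\<And>g. g \<in> carrier G \<Longrightarrow> z \<otimes> g = g \<otimes> z) \<Longrightarrow> z \<in> grp_center G"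
  by (auto simp: grp_center_def)

lemma comm_inv: "x \<otimes> g = g \<otimes> x \<Longrightarrow> x \<in> carrier G \<Longrightarrow> g \<in> carrier G \<Longrightarrow> inv x \<otimes> g = g \<otimes> inv x"
proof -
  assume c: "x \<otimes> g = g \<otimes> x" and x: "x \<in> carrier G" and g: "g \<in> carrier G"
  have "inv x \<otimes> g = inv x \<otimes> (g \<otimes> x) \<otimes> inv x" using x g by (simp add: m_assoc)
  also have "\<dots> = inv x \<otimes> (x \<otimes> g) \<otimes> inv x" using c by simp
  also have "\<dots> = g \<otimes> inv x" using x g by (simp add: m_assoc[symmetric])
  finally show ?thesis .
qed

lemma center_subgroup: "subgroup (grp_center G) G"
proof
  show "grp_center G \<subseteq> carrier G" by (rule center_sub)
  show "\<one> \<in> grp_center G" by (auto intro: centerI)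
  fix x y assume x: "x \<in> grp_center G" and y: "y \<in> grp_center G"
  hence xc: "x \<in> carrier G" and yc: "y \<in> carrier G" using center_sub by auto
  show "x \<otimes> y \<in> grp_center G"
  proof (rule centerI)
    show "x \<otimes> y \<in> carrier G" using xc yc by simp
    fix g assume g: "g \<in> carrier G"
    have "x \<otimes> y \<otimes> g = x \<otimes> (g \<otimes> y)" using centerD[OF y g] xc yc g by (simp add: m_assoc)
    also have "\<dots> = g \<otimes> (x \<otimes> y)" using centerD[OF x g] xc yc g by (simp add: m_assoc[symmetric])
    finally show "x \<otimes> y \<otimes> g = g \<otimes> (x \<otimes> y)" .
  qed
  show "inv x \<in> grp_center G"
  proof (rule centerI)
    show "inv x \<in> carrier G" using xc by simp
    fix g assume g: "g \<in> carrier G"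
    show "inv x \<otimes> g = g \<otimes> inv x"
      using centerD[OF x g] xc g by (rule comm_inv)
  qed
qed

lemma center_normal: "grp_center G \<lhd> G"
  unfolding normal_inv_iff
proof (intro conjI ballI center_subgroup)
  fix x h assume x: "x \<in> carrier G" and h: "h \<in> grp_center G"
  have hc: "h \<in> carrier G" using h center_sub by auto
  have "x \<otimes> h \<otimes> inv x = h \<otimes> x \<otimes> inv x" using centerD[OF h x] by simp
  also have "\<dots> = h" using x hc by (simp add: m_assoc)
  finally have "x \<otimes> h \<otimes> inv x = h" .
  thus "x \<otimes> h \<otimes> inv x \<in> grp_center G" using h by simp
qed

lemma conj_class_sub: "x \<in> carrier G \<Longrightarrow> conj_class G x \<subseteq> carrier G"
  by (auto simp: conj_class_def)

lemma conj_class_self: "x \<in> carrier G \<Longrightarrow> x \<in> conj_class G x"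
  unfolding conj_class_def by (rule CollectI, rule exI[of _ \<one>]) simp

lemma conj_classD: "y \<in> conj_class G x \<Longrightarrow> \<exists>g\<in>carrier G. y = g \<otimes> x \<otimes> inv g"
  by (auto simp: conj_class_def)

lemma conj_classI: "g \<in> carrier G \<Longrightarrow> g \<otimes> x \<otimes> inv g \<in> conj_class G x"
  by (auto simp: conj_class_def)

lemma conj_conj: "g \<in> carrier G \<Longrightarrow> h \<in> carrier G \<Longrightarrow> x \<in> carrier G \<Longrightarrow>
   g \<otimes> (h \<otimes> x \<otimes> inv h) \<otimes> inv g = (g \<otimes> h) \<otimes> x \<otimes> inv (g \<otimes> h)"
  by (simp add: m_assoc inv_mult_group)

lemma conj_class_eq: assumes x: "x \<in> carrier G" and y: "y \<in> conj_class G x"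
  shows "conj_class G y = conj_class G x"
proof -
  obtain h where h: "h \<in> carrier G" "y = h \<otimes> x \<otimes> inv h" using conj_classD[OF y] by blast
  show ?thesis
  proof
    show "conj_class G y \<subseteq> conj_class G x"
    proof
      fix w assume "w \<in> conj_class G y"
      then obtain g where g: "g \<in> carrier G" "w = g \<otimes> y \<otimes> inv g" using conj_classD by blast
      thus "w \<in> conj_class G x" using h x conj_conj[of g h x] conj_classI[of "g \<otimes> h" x] by simp
    qed
    show "conj_class G x \<subseteq> conj_class G y"
    proof
      fix w assume "w \<in> conj_class G x"
      then obtain g where g: "g \<in> carrier G" "w = g \<otimes> x \<otimes> inv g" using conj_classD by blast
      have "x = inv h \<otimes> y \<otimes> inv (inv h)" using h x by (simp add: m_assoc)
      hence "w = (g \<otimes> inv h) \<otimes> y \<otimes> inv (g \<otimes> inv h)"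
        using g h x conj_conj[of g "inv h" y] by simp
      thus "w \<in> conj_class G y" using g h conj_classI[of "g \<otimes> inv h" y] by simp
    qed
  qed
qed

lemma conj_noncentral: "x \<in> carrier G - grp_center G \<Longrightarrow> g \<in> carrier G \<Longrightarrow> g \<otimes> x \<otimes> inv g \<in> carrier G - grp_center G"
proof -
  assume x: "x \<in> carrier G - grp_center G" and g: "g \<in> carrier G"
  show ?thesis
  proof (rule ccontr)
    assume "g \<otimes> x \<otimes> inv g \<notin> carrier G - grp_center G"
    hence c: "g \<otimes> x \<otimes> inv g \<in> grp_center G" using x g by auto
    define cc where "cc = g \<otimes> x \<otimes> inv g"
    have ccc: "cc \<in> carrier G" using cc_def g x by simp
    have "inv g \<otimes> cc \<otimes> g = inv g \<otimes> (cc \<otimes> g)" using ccc g by (simp add: m_assoc)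
    also have "\<dots> = inv g \<otimes> (g \<otimes> cc)" using centerD[OF c g] cc_def by simp
    also have "\<dots> = cc" using ccc g by simp
    finally have "inv g \<otimes> (g \<otimes> x \<otimes> inv g) \<otimes> g = g \<otimes> x \<otimes> inv g" using cc_def by simp
    moreover have "inv g \<otimes> (g \<otimes> x \<otimes> inv g) \<otimes> g = x" using g x by (simp add: m_assoc)
    ultimately show False using c x by simp
  qed
qed

lemma conj_comm: "a \<in> carrier G \<Longrightarrow> b \<in> carrier G \<Longrightarrow> c \<in> carrier G \<Longrightarrow> a \<otimes> b = b \<otimes> a \<Longrightarrow>
  (c \<otimes> a \<otimes> inv c) \<otimes> (c \<otimes> b \<otimes> inv c) = (c \<otimes> b \<otimes> inv c) \<otimes> (c \<otimes> a \<otimes> inv c)"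
proof -
  assume a: "a \<in> carrier G" and b: "b \<in> carrier G" and c: "c \<in> carrier G" and ab: "a \<otimes> b = b \<otimes> a"
  have 1: "(c \<otimes> a \<otimes> inv c) \<otimes> (c \<otimes> b \<otimes> inv c) = c \<otimes> (a \<otimes> b) \<otimes> inv c"
    using a b c by (simp add: m_assoc)
  have 2: "(c \<otimes> b \<otimes> inv c) \<otimes> (c \<otimes> a \<otimes> inv c) = c \<otimes> (b \<otimes> a) \<otimes> inv c"
    using a b c by (simp add: m_assoc)
  show ?thesis using 1 2 ab by simp
qed

lemma vertices_iff: "Xv \<in> nccc_vertices G \<longleftrightarrow> (\<exists>x \<in> carrier G - grp_center G. Xv = conj_class G x)"
  by (auto simp: nccc_vertices_def)

lemma adj_iff: "nccc_adj G Xv Yv \<longleftrightarrow> Xv \<in> nccc_vertices G \<and> Yv \<in> nccc_vertices G \<and> Xv \<noteq> Yv \<and> \<not> comm_rel G Xv Yv"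
  by (auto simp: nccc_adj_def comm_rel_def)

lemma vertex_elems: "Xv \<in> nccc_vertices G \<Longrightarrow> w \<in> Xv \<Longrightarrow> w \<in> carrier G - grp_center G \<and> Xv = conj_class G w"
proof -
  assume Xv: "Xv \<in> nccc_vertices G" and w: "w \<in> Xv"
  obtain x where x: "x \<in> carrier G - grp_center G" "Xv = conj_class G x" using Xv vertices_iff by blast
  obtain g where g: "g \<in> carrier G" "w = g \<otimes> x \<otimes> inv g" using conj_classD w x by blast
  have "w \<in> carrier G - grp_center G" using conj_noncentral[OF x(1) g(1)] g by simp
  moreover have "Xv = conj_class G w" using conj_class_eq[of x w] x w by simp
  ultimately show ?thesis by simp
qed

lemma comm_rel_trans:
  assumes ca: "CA G" and Xv: "Xv \<in> nccc_vertices G" and Yv: "Yv \<in> nccc_vertices G" and Wv: "Wv \<in> nccc_vertices G"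
    and xy: "comm_rel G Xv Yv" and yw: "comm_rel G Yv Wv"
  shows "comm_rel G Xv Wv"
proof -
  obtain x1 y1 where x1: "x1 \<in> Xv" and y1: "y1 \<in> Yv" and c1: "x1 \<otimes> y1 = y1 \<otimes> x1" using xy unfolding comm_rel_def by blast
  obtain y2 w2 where y2: "y2 \<in> Yv" and w2: "w2 \<in> Wv" and c2: "y2 \<otimes> w2 = w2 \<otimes> y2" using yw unfolding comm_rel_def by blast
  have x1c: "x1 \<in> carrier G - grp_center G" and Xe: "Xv = conj_class G x1" using vertex_elems[OF Xv x1] by auto
  have y1c: "y1 \<in> carrier G - grp_center G" and Ye: "Yv = conj_class G y1" using vertex_elems[OF Yv y1] by auto
  have y2c: "y2 \<in> carrier G - grp_center G" using vertex_elems[OF Yv y2] by auto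
  have w2c: "w2 \<in> carrier G - grp_center G" using vertex_elems[OF Wv w2] by auto
  obtain c where c: "c \<in> carrier G" "y2 = c \<otimes> y1 \<otimes> inv c" using conj_classD y2 Ye by blast
  define x' where "x' = c \<otimes> x1 \<otimes> inv c"
  have x'Xv: "x' \<in> Xv" using Xe conj_classI[OF c(1)] x'_def by simp
  have x'c: "x' \<in> carrier G - grp_center G" using conj_noncentral[OF x1c c(1)] x'_def by simp
  have "x' \<otimes> y2 = y2 \<otimes> x'" using conj_comm[of x1 y1 c] x1c y1c c c1 x'_def by simp
  hence "x' \<otimes> w2 = w2 \<otimes> x'" using ca x'c y2c w2c c2 unfolding CA_def by blast
  thus ?thesis using x'Xv w2 unfolding comm_rel_def by blast
qed

lemma mpart_CA:
  assumes fin: "finite (carrier G)" and ca: "CA G"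
  shows "mpart (nccc_vertices G) (comm_rel G) (nccc_adj G)"
proof
  show "finite (nccc_vertices G)" unfolding nccc_vertices_def using fin by simp
  fix i assume "i \<in> nccc_vertices G"
  then obtain x where "x \<in> carrier G - grp_center G" "i = conj_class G x" using vertices_iff by blast
  thus "comm_rel G i i" using conj_class_self comm_rel_def by fastforce
next
  fix i j assume "comm_rel G i j" thus "comm_rel G j i" unfolding comm_rel_def by (metis (no_types))
next
  fix i j k assume "i \<in> nccc_vertices G" "j \<in> nccc_vertices G" "k \<in> nccc_vertices G"
    "comm_rel G i j" "comm_rel G j k"
  thus "comm_rel G i k" using comm_rel_trans[OF ca] by blast
next
  fix i j show "nccc_adj G i j = (i \<in> nccc_vertices G \<and> j \<in> nccc_vertices G \<and> i \<noteq> j \<and> \<not> comm_rel G i j)"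
    by (rule adj_iff)
qed

lemma L_integral_CA:
  assumes fin: "finite (carrier G)" and ca: "CA G"
  shows "graph_L_integral (nccc_vertices G) (nccc_adj G)"
  unfolding graph_L_integral_def using mpart.L_integral[OF mpart_CA[OF fin ca]] .

end

context group
begin

lemma subgroupI':
  assumes "H \<subseteq> carrier G" "\<one> \<in> H" "\<And>a b. a \<in> H \<Longrightarrow> b \<in> H \<Longrightarrow> a \<otimes> b \<in> H"
    "\<And>a. a \<in> H \<Longrightarrow> inv a \<in> H"
  shows "subgroup H G"
  using assms by (auto intro: subgroup.intro)

lemma cent_subgroup: "x \<in> carrier G \<Longrightarrow> subgroup {g \<in> carrier G. g \<otimes> x = x \<otimes> g} G"
proof -
  assume x: "x \<in> carrier G"
  show ?thesis
  proof (rule subgroupI')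
    show "{g \<in> carrier G. g \<otimes> x = x \<otimes> g} \<subseteq> carrier G" by blast
    show "\<one> \<in> {g \<in> carrier G. g \<otimes> x = x \<otimes> g}" using x by simp
  next
    fix a b assume a: "a \<in> {g \<in> carrier G. g \<otimes> x = x \<otimes> g}" and b: "b \<in> {g \<in> carrier G. g \<otimes> x = x \<otimes> g}"
    have ac: "a \<in> carrier G" and ax: "a \<otimes> x = x \<otimes> a" using a by auto
    have bc: "b \<in> carrier G" and bx: "b \<otimes> x = x \<otimes> b" using b by auto
    have "a \<otimes> b \<otimes> x = a \<otimes> (b \<otimes> x)" using ac bc x by (rule m_assoc)
    also have "\<dots> = a \<otimes> (x \<otimes> b)" using bx by simp
    also have "\<dots> = (a \<otimes> x) \<otimes> b" using ac bc x by (simp only: m_assoc)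
    also have "\<dots> = (x \<otimes> a) \<otimes> b" using ax by simp
    also have "\<dots> = x \<otimes> (a \<otimes> b)" using ac bc x by (simp only: m_assoc)
    finally show "a \<otimes> b \<in> {g \<in> carrier G. g \<otimes> x = x \<otimes> g}" using ac bc by simp
  next
    fix a assume a: "a \<in> {g \<in> carrier G. g \<otimes> x = x \<otimes> g}"
    have ac: "a \<in> carrier G" and ax: "a \<otimes> x = x \<otimes> a" using a by auto
    have "inv a \<otimes> x = x \<otimes> inv a" by (rule comm_inv[OF ax ac x])
    thus "inv a \<in> {g \<in> carrier G. g \<otimes> x = x \<otimes> g}" using ac by simp
  qed
qed

lemma gen_comm:
  assumes S: "S \<subseteq> carrier G" and c: "\<And>a b. a \<in> S \<Longrightarrow> b \<in> S \<Longrightarrow> a \<otimes> b = b \<otimes> a"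
  shows "\<And>a b. a \<in> generate G S \<Longrightarrow> b \<in> generate G S \<Longrightarrow> a \<otimes> b = b \<otimes> a"
proof -
  have 1: "a \<otimes> s = s \<otimes> a" if "a \<in> generate G S" "s \<in> S" for a s
  proof -
    have "S \<subseteq> {g \<in> carrier G. g \<otimes> s = s \<otimes> g}" using S c that(2) by auto
    moreover have "s \<in> carrier G" using that(2) S by auto
    ultimately have "generate G S \<subseteq> {g \<in> carrier G. g \<otimes> s = s \<otimes> g}"
      by (intro generate_subgroup_incl cent_subgroup)
    thus ?thesis using that by auto
  qed
  fix a b assume a: "a \<in> generate G S" and b: "b \<in> generate G S"
  have ac: "a \<in> carrier G" using a generate_incl[OF S] by auto
  have "S \<subseteq> {g \<in> carrier G. g \<otimes> a = a \<otimes> g}" using S 1[OF a] by auto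
  hence "generate G S \<subseteq> {g \<in> carrier G. g \<otimes> a = a \<otimes> g}"
    using ac by (intro generate_subgroup_incl cent_subgroup)
  thus "a \<otimes> b = b \<otimes> a" using b by auto
qed

lemma conj_pres:
  assumes S: "S \<subseteq> carrier G" and t: "t \<in> carrier G" and H: "subgroup H G"
    and st: "\<And>s. s \<in> S \<Longrightarrow> t \<otimes> s \<otimes> inv t \<in> H"
  shows "\<And>a. a \<in> generate G S \<Longrightarrow> t \<otimes> a \<otimes> inv t \<in> H"
proof -
  have sg: "subgroup {g \<in> carrier G. t \<otimes> g \<otimes> inv t \<in> H} G"
  proof (rule subgroupI')
    show "{g \<in> carrier G. t \<otimes> g \<otimes> inv t \<in> H} \<subseteq> carrier G" by blast
    have "t \<otimes> \<one> \<otimes> inv t = \<one>" using t by simp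
    thus "\<one> \<in> {g \<in> carrier G. t \<otimes> g \<otimes> inv t \<in> H}" using subgroup.one_closed[OF H] by simp
  next
    fix a b assume a: "a \<in> {g \<in> carrier G. t \<otimes> g \<otimes> inv t \<in> H}" and b: "b \<in> {g \<in> carrier G. t \<otimes> g \<otimes> inv t \<in> H}"
    have ac: "a \<in> carrier G" and aH: "t \<otimes> a \<otimes> inv t \<in> H" using a by auto
    have bc: "b \<in> carrier G" and bH: "t \<otimes> b \<otimes> inv t \<in> H" using b by auto
    have "t \<otimes> (a \<otimes> b) \<otimes> inv t = (t \<otimes> a \<otimes> inv t) \<otimes> (t \<otimes> b \<otimes> inv t)" using ac bc t by (simp add: m_assoc)
    moreover have "(t \<otimes> a \<otimes> inv t) \<otimes> (t \<otimes> b \<otimes> inv t) \<in> H" by (rule subgroup.m_closed[OF H aH bH])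
    ultimately show "a \<otimes> b \<in> {g \<in> carrier G. t \<otimes> g \<otimes> inv t \<in> H}" using ac bc by simp
  next
    fix a assume a: "a \<in> {g \<in> carrier G. t \<otimes> g \<otimes> inv t \<in> H}"
    have ac: "a \<in> carrier G" and aH: "t \<otimes> a \<otimes> inv t \<in> H" using a by auto
    have "t \<otimes> inv a \<otimes> inv t = inv (t \<otimes> a \<otimes> inv t)" using ac t by (simp add: inv_mult_group m_assoc)
    moreover have "inv (t \<otimes> a \<otimes> inv t) \<in> H" by (rule subgroup.m_inv_closed[OF H aH])
    ultimately show "inv a \<in> {g \<in> carrier G. t \<otimes> g \<otimes> inv t \<in> H}" using ac by simp
  qed
  have "S \<subseteq> {g \<in> carrier G. t \<otimes> g \<otimes> inv t \<in> H}" using S st by auto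
  hence "generate G S \<subseteq> {g \<in> carrier G. t \<otimes> g \<otimes> inv t \<in> H}"
    by (rule generate_subgroup_incl[OF _ sg])
  thus "\<And>a. a \<in> generate G S \<Longrightarrow> t \<otimes> a \<otimes> inv t \<in> H" by blast
qed

lemma gen_idx2:
  assumes S: "S \<subseteq> carrier G" and t: "t \<in> carrier G"
    and gen: "generate G {x, y} = carrier G" and xc: "x \<in> carrier G" and yc: "y \<in> carrier G"
    and st1: "\<And>s. s \<in> S \<Longrightarrow> t \<otimes> s \<otimes> inv t \<in> generate G S"
    and st2: "\<And>s. s \<in> S \<Longrightarrow> inv t \<otimes> s \<otimes> t \<in> generate G S"
    and tt: "t \<otimes> t \<in> generate G S"
    and xA: "x \<in> generate G S \<or> inv t \<otimes> x \<in> generate G S"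
    and yA: "y \<in> generate G S \<or> inv t \<otimes> y \<in> generate G S"
  shows "\<And>g h. g \<in> carrier G - generate G S \<Longrightarrow> h \<in> carrier G - generate G S \<Longrightarrow> inv g \<otimes> h \<in> generate G S"
proof -
  define A where "A = generate G S"
  have A: "subgroup A G" using generate_is_subgroup[OF S] A_def by simp
  have Ac: "A \<subseteq> carrier G" by (rule subgroup.subset[OF A])
  have c1: "t \<otimes> a \<otimes> inv t \<in> A" if "a \<in> A" for a using conj_pres[OF S t generate_is_subgroup[OF S] st1, of a] that A_def by simp
  have c2: "inv t \<otimes> a \<otimes> t \<in> A" if "a \<in> A" for a
    using conj_pres[OF S inv_closed[OF t] generate_is_subgroup[OF S], of a] st2 that A_def t by simp
  define T where "T = A \<union> {g \<in> carrier G. inv t \<otimes> g \<in> A}"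
  have T: "subgroup T G"
  proof (rule subgroupI')
    show "T \<subseteq> carrier G" using Ac T_def by auto
    show "\<one> \<in> T" using subgroup.one_closed[OF A] T_def by simp
    fix a b assume a: "a \<in> T" and b: "b \<in> T"
    have ac: "a \<in> carrier G" and bc: "b \<in> carrier G" using a b Ac T_def by auto
    show "a \<otimes> b \<in> T"
    proof (cases "a \<in> A")
      case True note aA = this
      show ?thesis
      proof (cases "b \<in> A")
        case True
        have "a \<otimes> b \<in> A" by (rule subgroup.m_closed[OF A aA True])
        thus ?thesis using T_def by simp
      next
        case False
        hence b': "inv t \<otimes> b \<in> A" using b T_def by auto
        have "inv t \<otimes> (a \<otimes> b) = (inv t \<otimes> a \<otimes> t) \<otimes> (inv t \<otimes> b)" using ac bc t by (simp add: m_assoc)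
        moreover have "(inv t \<otimes> a \<otimes> t) \<otimes> (inv t \<otimes> b) \<in> A" by (rule subgroup.m_closed[OF A c2[OF aA] b'])
        ultimately have "inv t \<otimes> (a \<otimes> b) \<in> A" by simp
        thus ?thesis using T_def ac bc by auto
      qed
    next
      case False
      hence a': "inv t \<otimes> a \<in> A" using a T_def by auto
      show ?thesis
      proof (cases "b \<in> A")
        case True
        have "inv t \<otimes> (a \<otimes> b) = (inv t \<otimes> a) \<otimes> b" using ac bc t by (simp add: m_assoc)
        moreover have "(inv t \<otimes> a) \<otimes> b \<in> A" by (rule subgroup.m_closed[OF A a' True])
        ultimately have "inv t \<otimes> (a \<otimes> b) \<in> A" by simp
        thus ?thesis using T_def ac bc by auto
      next
        case False
        hence b': "inv t \<otimes> b \<in> A" using b T_def by auto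
        have "a \<otimes> b = (t \<otimes> t) \<otimes> (inv t \<otimes> (inv t \<otimes> a) \<otimes> t) \<otimes> (inv t \<otimes> b)"
          using ac bc t by (simp add: m_assoc)
        moreover have "(t \<otimes> t) \<otimes> (inv t \<otimes> (inv t \<otimes> a) \<otimes> t) \<otimes> (inv t \<otimes> b) \<in> A"
          by (rule subgroup.m_closed[OF A subgroup.m_closed[OF A tt[folded A_def] c2[OF a']] b'])
        ultimately have "a \<otimes> b \<in> A" by simp
        thus ?thesis using T_def by auto
      qed
    qed
    show "inv a \<in> T"
    proof (cases "a \<in> A")
      case True
      have "inv a \<in> A" by (rule subgroup.m_inv_closed[OF A True])
      thus ?thesis using T_def by simp
    next
      case False
      hence a': "inv t \<otimes> a \<in> A" using a T_def by auto
      have "inv t \<otimes> inv a = (inv t \<otimes> inv (inv t \<otimes> a) \<otimes> t) \<otimes> inv (t \<otimes> t)"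
        using ac t by (simp add: m_assoc inv_mult_group)
      moreover have "inv t \<otimes> inv (inv t \<otimes> a) \<otimes> t \<otimes> inv (t \<otimes> t) \<in> A"
        by (rule subgroup.m_closed[OF A c2[OF subgroup.m_inv_closed[OF A a']] subgroup.m_inv_closed[OF A tt[folded A_def]]])
      ultimately have "inv t \<otimes> inv a \<in> A" by simp
      thus ?thesis using T_def ac by auto
    qed
  qed
  have "{x, y} \<subseteq> T" using xA yA xc yc T_def A_def by auto
  hence "generate G {x, y} \<subseteq> T" by (rule generate_subgroup_incl[OF _ T])
  hence carT: "carrier G \<subseteq> T" using gen by simp
  fix g h assume g: "g \<in> carrier G - generate G S" and h: "h \<in> carrier G - generate G S"
  have g': "inv t \<otimes> g \<in> A" and h': "inv t \<otimes> h \<in> A" using g h carT T_def A_def by auto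
  have "inv g \<otimes> h = inv (inv t \<otimes> g) \<otimes> (inv t \<otimes> h)" using g h t by (simp add: m_assoc inv_mult_group)
  moreover have "inv (inv t \<otimes> g) \<otimes> (inv t \<otimes> h) \<in> A"
    by (rule subgroup.m_closed[OF A subgroup.m_inv_closed[OF A g'] h'])
  ultimately show "inv g \<otimes> h \<in> generate G S" using A_def by simp
qed

end

locale idx2 = group G for G (structure) +
  fixes A
  assumes A_sub: "subgroup A G"
    and A_comm: "\<And>a b. a \<in> A \<Longrightarrow> b \<in> A \<Longrightarrow> a \<otimes> b = b \<otimes> a"
    and A_idx: "\<And>g h. g \<in> carrier G - A \<Longrightarrow> h \<in> carrier G - A \<Longrightarrow> inv g \<otimes> h \<in> A"
    and nonab: "\<exists>x \<in> carrier G. \<exists>y \<in> carrier G. x \<otimes> y \<noteq> y \<otimes> x"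
begin

lemma Ac: "A \<subseteq> carrier G" by (rule subgroup.subset[OF A_sub])

lemma a_comm_all:
  assumes a: "a \<in> A" and t: "t \<in> carrier G - A" and c: "a \<otimes> t = t \<otimes> a"
  shows "a \<in> grp_center G"
proof (rule centerI)
  show ac: "a \<in> carrier G" using a Ac by auto
  fix g assume g: "g \<in> carrier G"
  show "a \<otimes> g = g \<otimes> a"
  proof (cases "g \<in> A")
    case True thus ?thesis using A_comm a by blast
  next
    case False
    define b where "b = inv t \<otimes> g"
    have bA: "b \<in> A" using A_idx[OF t] False g b_def by auto
    have bc: "b \<in> carrier G" using bA Ac by auto
    have ge: "g = t \<otimes> b" using b_def t g by simp
    have "a \<otimes> (t \<otimes> b) = (t \<otimes> a) \<otimes> b" using c ac t bc by (simp add: m_assoc[symmetric])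
    also have "\<dots> = t \<otimes> (b \<otimes> a)" using A_comm[OF a bA] ac t bc by (simp add: m_assoc)
    also have "\<dots> = (t \<otimes> b) \<otimes> a" using ac t bc by (simp add: m_assoc)
    finally show ?thesis using ge by simp
  qed
qed

lemma Z_sub_A: "grp_center G \<subseteq> A"
proof
  fix z assume z: "z \<in> grp_center G"
  show "z \<in> A"
  proof (rule ccontr)
    assume zA: "z \<notin> A"
    have zt: "z \<in> carrier G - A" using z center_sub zA by auto
    have AZ: "a \<in> grp_center G" if "a \<in> A" for a
      using a_comm_all[OF that zt] centerD[OF z] that Ac by auto
    have allZ: "g \<in> grp_center G" if "g \<in> carrier G" for g
    proof (cases "g \<in> A")
      case True thus ?thesis using AZ by blast
    next
      case False
      hence "inv z \<otimes> g \<in> A" using A_idx[OF zt] that by auto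
      hence "inv z \<otimes> g \<in> grp_center G" using AZ by blast
      hence "z \<otimes> (inv z \<otimes> g) \<in> grp_center G" using z subgroup.m_closed[OF center_subgroup] by simp
      thus ?thesis using z center_sub that by auto
    qed
    obtain x y where "x \<in> carrier G" "y \<in> carrier G" "x \<otimes> y \<noteq> y \<otimes> x" using nonab by blast
    thus False using allZ centerD by blast
  qed
qed

lemma A_out_noncomm: "a \<in> A - grp_center G \<Longrightarrow> g \<in> carrier G - A \<Longrightarrow> a \<otimes> g \<noteq> g \<otimes> a"
  using a_comm_all by blast

lemma out_comm:
  assumes g: "g \<in> carrier G - A" and h: "h \<in> carrier G - A" and c: "g \<otimes> h = h \<otimes> g"
  shows "inv g \<otimes> h \<in> grp_center G"
proof -
  define u where "u = inv g \<otimes> h"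
  have uA: "u \<in> A" using A_idx[OF g h] u_def by simp
  have "u \<otimes> g = inv g \<otimes> (h \<otimes> g)" using g h u_def by (simp add: m_assoc)
  also have "\<dots> = h" using g h by (simp add: c[symmetric])
  also have "\<dots> = g \<otimes> u" using g h u_def by simp
  finally show ?thesis using a_comm_all[OF uA g] u_def by simp
qed

lemma CA: "CA G"
  unfolding CA_def
proof (intro ballI impI)
  fix u v w assume u: "u \<in> carrier G - grp_center G" and v: "v \<in> carrier G - grp_center G"
    and w: "w \<in> carrier G - grp_center G" and uv: "u \<otimes> v = v \<otimes> u" and vw: "v \<otimes> w = w \<otimes> v"
  show "u \<otimes> w = w \<otimes> u"
  proof (cases "u \<in> A")
    case True
    have vA: "v \<in> A"
    proof (rule ccontr)
      assume "v \<notin> A" thus False using A_out_noncomm[of u v] True u v uv by auto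
    qed
    have "w \<in> A"
    proof (rule ccontr)
      assume "w \<notin> A" thus False using A_out_noncomm[of v w] vA v w vw by auto
    qed
    thus ?thesis using True A_comm by blast
  next
    case False
    have vA: "v \<notin> A"
    proof
      assume "v \<in> A" thus False using A_out_noncomm[of v u] False u v uv by auto
    qed
    have wA: "w \<notin> A"
    proof
      assume "w \<in> A" thus False using A_out_noncomm[of w v] vA v w vw by auto
    qed
    have z1: "inv u \<otimes> v \<in> grp_center G" using out_comm[of u v] False vA u v uv by blast
    have z2: "inv v \<otimes> w \<in> grp_center G" using out_comm[of v w] wA vA w v vw by blast
    define z where "z = (inv u \<otimes> v) \<otimes> (inv v \<otimes> w)"
    have zZ: "z \<in> grp_center G" using z1 z2 z_def subgroup.m_closed[OF center_subgroup] by simp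
    have zc: "z \<in> carrier G" using zZ center_sub by auto
    have we: "w = u \<otimes> z" using u v w z_def by (simp add: m_assoc)
    have "u \<otimes> (u \<otimes> z) = (u \<otimes> z) \<otimes> u" using centerD[OF zZ, of u] u zc by (simp add: m_assoc)
    thus ?thesis using we by simp
  qed
qed

lemma tri:
  assumes one: "\<exists>g0 \<in> carrier G - A. \<forall>h \<in> carrier G - A. \<exists>c\<in>carrier G. \<exists>z \<in> grp_center G. c \<otimes> h \<otimes> inv c = g0 \<otimes> z"
  shows "\<And>K1 K2 K3. K1 \<in> nccc_vertices G \<Longrightarrow> K2 \<in> nccc_vertices G \<Longrightarrow> K3 \<in> nccc_vertices G \<Longrightarrow>
    comm_rel G K1 K2 \<or> comm_rel G K2 K3 \<or> comm_rel G K1 K3"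
proof -
  obtain g0 where g0: "g0 \<in> carrier G - A" and hg: "\<And>h. h \<in> carrier G - A \<Longrightarrow> \<exists>c\<in>carrier G. \<exists>z \<in> grp_center G. c \<otimes> h \<otimes> inv c = g0 \<otimes> z"
    using one by blast
  have same: "comm_rel G K L" if K: "K \<in> nccc_vertices G" and L: "L \<in> nccc_vertices G"
    and k: "k \<in> carrier G - grp_center G" "K = conj_class G k" and l: "l \<in> carrier G - grp_center G" "L = conj_class G l"
    and side: "(k \<in> A \<and> l \<in> A) \<or> (k \<notin> A \<and> l \<notin> A)" for K L k l
  proof (cases "k \<in> A")
    case True
    hence "k \<otimes> l = l \<otimes> k" using side A_comm by blast
    thus ?thesis using conj_class_self k l unfolding comm_rel_def by blast
  next
    case False
    obtain c1 z1 where c1: "c1 \<in> carrier G" "z1 \<in> grp_center G" "c1 \<otimes> k \<otimes> inv c1 = g0 \<otimes> z1"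
      using hg[of k] False k by blast
    obtain c2 z2 where c2: "c2 \<in> carrier G" "z2 \<in> grp_center G" "c2 \<otimes> l \<otimes> inv c2 = g0 \<otimes> z2"
      using hg[of l] False side l by blast
    have m1: "g0 \<otimes> z1 \<in> K" using c1 conj_classI[OF c1(1), of k] k by simp
    have m2: "g0 \<otimes> z2 \<in> L" using c2 conj_classI[OF c2(1), of l] l by simp
    have g0c: "g0 \<in> carrier G" using g0 by auto
    have z1c: "z1 \<in> carrier G" and z2c: "z2 \<in> carrier G" using c1 c2 center_sub by auto
    have "(g0 \<otimes> z1) \<otimes> (g0 \<otimes> z2) = g0 \<otimes> (z1 \<otimes> g0) \<otimes> z2" using g0c z1c z2c by (simp add: m_assoc)
    also have "\<dots> = g0 \<otimes> (g0 \<otimes> z1) \<otimes> z2" using centerD[OF c1(2) g0c] by simp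
    also have "\<dots> = g0 \<otimes> g0 \<otimes> (z1 \<otimes> z2)" using g0c z1c z2c by (simp add: m_assoc)
    also have "\<dots> = g0 \<otimes> g0 \<otimes> (z2 \<otimes> z1)" using centerD[OF c1(2) z2c] by simp
    also have "\<dots> = g0 \<otimes> (g0 \<otimes> z2) \<otimes> z1" using g0c z1c z2c by (simp add: m_assoc)
    also have "\<dots> = g0 \<otimes> (z2 \<otimes> g0) \<otimes> z1" using centerD[OF c2(2) g0c] by simp
    also have "\<dots> = (g0 \<otimes> z2) \<otimes> (g0 \<otimes> z1)" using g0c z1c z2c by (simp add: m_assoc)
    finally show ?thesis using m1 m2 unfolding comm_rel_def by blast
  qed
  fix K1 K2 K3 assume K1: "K1 \<in> nccc_vertices G" and K2: "K2 \<in> nccc_vertices G" and K3: "K3 \<in> nccc_vertices G"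
  obtain k1 where k1: "k1 \<in> carrier G - grp_center G" "K1 = conj_class G k1" using K1 vertices_iff by blast
  obtain k2 where k2: "k2 \<in> carrier G - grp_center G" "K2 = conj_class G k2" using K2 vertices_iff by blast
  obtain k3 where k3: "k3 \<in> carrier G - grp_center G" "K3 = conj_class G k3" using K3 vertices_iff by blast
  show "comm_rel G K1 K2 \<or> comm_rel G K2 K3 \<or> comm_rel G K1 K3"
  proof (cases "(k1 \<in> A) = (k2 \<in> A)")
    case True thus ?thesis using same[OF K1 K2 k1 k2] by blast
  next
    case F1: False
    show ?thesis
    proof (cases "(k2 \<in> A) = (k3 \<in> A)")
      case True thus ?thesis using same[OF K2 K3 k2 k3] by blast
    next
      case False
      hence "(k1 \<in> A) = (k3 \<in> A)" using F1 by blast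
      thus ?thesis using same[OF K1 K3 k1 k3] by blast
    qed
  qed
qed

end

context group
begin

lemma pow2: "x \<in> carrier G \<Longrightarrow> x [^] (2::nat) = x \<otimes> x"
  by (simp add: numeral_2_eq_2)
lemma pow3: "x \<in> carrier G \<Longrightarrow> x [^] (3::nat) = x \<otimes> x \<otimes> x"
  by (simp add: numeral_3_eq_3)
lemma pow4: "x \<in> carrier G \<Longrightarrow> x [^] (4::nat) = x \<otimes> x \<otimes> x \<otimes> x"
  by (simp add: eval_nat_numeral)

lemma inv_sq1: "y \<in> carrier G \<Longrightarrow> y \<otimes> y = \<one> \<Longrightarrow> inv y = y"
proof -
  assume y: "y \<in> carrier G" and yy: "y \<otimes> y = \<one>"
  have "inv y = inv y \<otimes> (y \<otimes> y)" using yy y by simp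
  also have "\<dots> = y" using y by simp
  finally show ?thesis .
qed

lemma conj_swap: "t \<in> carrier G \<Longrightarrow> x \<in> carrier G \<Longrightarrow> inv t \<otimes> x \<otimes> t = inv x \<Longrightarrow> t \<otimes> x \<otimes> inv t = inv x"
proof -
  assume t: "t \<in> carrier G" and x: "x \<in> carrier G" and r: "inv t \<otimes> x \<otimes> t = inv x"
  have "inv (inv t \<otimes> x \<otimes> t) = inv t \<otimes> inv x \<otimes> t" using t x by (simp add: inv_mult_group m_assoc)
  hence 1: "inv t \<otimes> inv x \<otimes> t = x" using r x by simp
  have "t \<otimes> x \<otimes> inv t = t \<otimes> (inv t \<otimes> inv x \<otimes> t) \<otimes> inv t" using 1 by simp
  also have "\<dots> = inv x" using t x by (simp add: m_assoc)
  finally show ?thesis .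
qed

lemma gens_central:
  assumes gen: "generate G {x, y} = carrier G" and x: "x \<in> carrier G" and y: "y \<in> carrier G"
    and z: "z \<in> carrier G" and zx: "z \<otimes> x = x \<otimes> z" and zy: "z \<otimes> y = y \<otimes> z"
  shows "z \<in> grp_center G"
proof -
  have "{x, y} \<subseteq> {g \<in> carrier G. g \<otimes> z = z \<otimes> g}" using x y zx zy by auto
  hence "generate G {x, y} \<subseteq> {g \<in> carrier G. g \<otimes> z = z \<otimes> g}"
    by (rule generate_subgroup_incl[OF _ cent_subgroup[OF z]])
  hence "\<And>g. g \<in> carrier G \<Longrightarrow> z \<otimes> g = g \<otimes> z" using gen by auto
  thus ?thesis using z by (rule centerI[rotated])
qed

lemma idx2_intro:
  assumes nonab: "\<exists>x \<in> carrier G. \<exists>y \<in> carrier G. x \<otimes> y \<noteq> y \<otimes> x"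
    and S: "S \<subseteq> carrier G" and Sc: "\<And>a b. a \<in> S \<Longrightarrow> b \<in> S \<Longrightarrow> a \<otimes> b = b \<otimes> a"
    and t: "t \<in> carrier G"
    and gen: "generate G {x, y} = carrier G" and xc: "x \<in> carrier G" and yc: "y \<in> carrier G"
    and st1: "\<And>s. s \<in> S \<Longrightarrow> t \<otimes> s \<otimes> inv t \<in> generate G S"
    and st2: "\<And>s. s \<in> S \<Longrightarrow> inv t \<otimes> s \<otimes> t \<in> generate G S"
    and tt: "t \<otimes> t \<in> generate G S"
    and xA: "x \<in> generate G S \<or> inv t \<otimes> x \<in> generate G S"
    and yA: "y \<in> generate G S \<or> inv t \<otimes> y \<in> generate G S"
  shows "idx2 G (generate G S)"
proof (intro idx2.intro idx2_axioms.intro)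
  show "group G" by (rule is_group)
  show "subgroup (generate G S) G" by (rule generate_is_subgroup[OF S])
  show "\<And>a b. a \<in> generate G S \<Longrightarrow> b \<in> generate G S \<Longrightarrow> a \<otimes> b = b \<otimes> a"
    by (rule gen_comm[OF S Sc])
  show "\<And>g h. g \<in> carrier G - generate G S \<Longrightarrow> h \<in> carrier G - generate G S \<Longrightarrow> inv g \<otimes> h \<in> generate G S"
    by (rule gen_idx2[OF S t gen xc yc st1 st2 tt xA yA])
  show "\<exists>x \<in> carrier G. \<exists>y \<in> carrier G. x \<otimes> y \<noteq> y \<otimes> x" by (rule nonab)
qed

end

context idx2
begin

lemma A_normal: assumes g: "g \<in> carrier G" and a: "a \<in> A" shows "g \<otimes> a \<otimes> inv g \<in> A"
proof (cases "g \<in> A")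
  case True thus ?thesis
    using subgroup.m_closed[OF A_sub subgroup.m_closed[OF A_sub True a] subgroup.m_inv_closed[OF A_sub True]] by simp
next
  case False
  have ac: "a \<in> carrier G" using a Ac by auto
  show ?thesis
  proof (rule ccontr)
    assume nb: "g \<otimes> a \<otimes> inv g \<notin> A"
    have "inv g \<otimes> (g \<otimes> a \<otimes> inv g) \<in> A" using A_idx[of g "g \<otimes> a \<otimes> inv g"] g False nb ac by simp
    hence "a \<otimes> inv g \<in> A" using g ac by (simp add: m_assoc)
    hence "inv a \<otimes> (a \<otimes> inv g) \<in> A" using subgroup.m_closed[OF A_sub subgroup.m_inv_closed[OF A_sub a]] by simp
    hence "inv g \<in> A" using g ac by simp
    hence "inv (inv g) \<in> A" using subgroup.m_inv_closed[OF A_sub] by blast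
    thus False using g False by simp
  qed
qed

lemma gen_not_A:
  assumes gen: "generate G {x, y} = carrier G" and x: "x \<in> A" and y: "y \<in> carrier G"
  shows "y \<notin> A"
proof
  assume yA: "y \<in> A"
  have "{x, y} \<subseteq> A" using x yA by simp
  hence "carrier G \<subseteq> A" using generate_subgroup_incl[OF _ A_sub] gen by metis
  thus False using nonab A_comm by blast
qed

definition psi where "psi t c = inv t \<otimes> c \<otimes> t"
definition fpsi where "fpsi t c = psi t c \<otimes> inv c"

lemma one_from_gens_t:
  assumes AS: "A = generate G S" and S: "S \<subseteq> carrier G" and t: "t \<in> carrier G - A"
    and gens: "\<And>s. s \<in> S \<Longrightarrow> \<exists>c\<in>A. \<exists>z\<in>grp_center G. s = (inv t \<otimes> c \<otimes> t) \<otimes> inv c \<otimes> z"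
  shows "\<forall>h \<in> carrier G - A. \<exists>c\<in>carrier G. \<exists>z \<in> grp_center G. c \<otimes> h \<otimes> inv c = t \<otimes> z"
proof -
  have tc: "t \<in> carrier G" using t by auto
  have psiA: "psi t c \<in> A" if "c \<in> A" for c
    using A_normal[OF inv_closed[OF tc] that] tc unfolding psi_def by simp
  have Acar: "c \<in> A \<Longrightarrow> c \<in> carrier G" for c using Ac by auto
  have fA: "fpsi t c \<in> A" if "c \<in> A" for c
    unfolding fpsi_def using subgroup.m_closed[OF A_sub psiA[OF that] subgroup.m_inv_closed[OF A_sub that]] .
  have psi_mult: "psi t (c1 \<otimes> c2) = psi t c1 \<otimes> psi t c2" if "c1 \<in> A" "c2 \<in> A" for c1 c2
    using that Acar tc unfolding psi_def by (simp add: m_assoc)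
  have f_mult: "fpsi t (c1 \<otimes> c2) = fpsi t c1 \<otimes> fpsi t c2" if c1: "c1 \<in> A" and c2: "c2 \<in> A" for c1 c2
  proof -
    have c1c: "c1 \<in> carrier G" and c2c: "c2 \<in> carrier G" using c1 c2 Acar by auto
    have p1: "psi t c1 \<in> carrier G" and p2: "psi t c2 \<in> carrier G" using psiA c1 c2 Acar by auto
    have "fpsi t (c1 \<otimes> c2) = psi t c1 \<otimes> (fpsi t c2 \<otimes> inv c1)"
      unfolding fpsi_def using psi_mult[OF c1 c2] c1c c2c p1 p2 by (simp add: m_assoc inv_mult_group)
    also have "fpsi t c2 \<otimes> inv c1 = inv c1 \<otimes> fpsi t c2"
      using A_comm[OF fA[OF c2] subgroup.m_inv_closed[OF A_sub c1]] .
    finally show ?thesis unfolding fpsi_def using c1c c2c p1 p2 by (simp add: m_assoc)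
  qed
  define Q where "Q = {a \<in> carrier G. \<exists>c\<in>A. \<exists>z\<in>grp_center G. a = fpsi t c \<otimes> z}"
  have Qsub: "subgroup Q G"
  proof (rule subgroupI')
    show "Q \<subseteq> carrier G" unfolding Q_def by blast
    have "fpsi t \<one> \<otimes> \<one> = \<one>" unfolding fpsi_def psi_def using tc by simp
    thus "\<one> \<in> Q" unfolding Q_def using subgroup.one_closed[OF A_sub] subgroup.one_closed[OF center_subgroup]
      by force
  next
    fix a b assume a: "a \<in> Q" and b: "b \<in> Q"
    obtain c1 z1 where c1: "c1 \<in> A" "z1 \<in> grp_center G" "a = fpsi t c1 \<otimes> z1" using a Q_def by blast
    obtain c2 z2 where c2: "c2 \<in> A" "z2 \<in> grp_center G" "b = fpsi t c2 \<otimes> z2" using b Q_def by blast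
    have f1: "fpsi t c1 \<in> carrier G" and f2: "fpsi t c2 \<in> carrier G" using fA c1 c2 Acar by auto
    have z1c: "z1 \<in> carrier G" and z2c: "z2 \<in> carrier G" using c1 c2 center_sub by auto
    have "a \<otimes> b = fpsi t c1 \<otimes> (z1 \<otimes> fpsi t c2) \<otimes> z2" using c1 c2 f1 f2 z1c z2c by (simp add: m_assoc)
    also have "\<dots> = fpsi t c1 \<otimes> (fpsi t c2 \<otimes> z1) \<otimes> z2" using centerD[OF c1(2) f2] by simp
    also have "\<dots> = fpsi t (c1 \<otimes> c2) \<otimes> (z1 \<otimes> z2)" using f_mult[OF c1(1) c2(1)] f1 f2 z1c z2c by (simp add: m_assoc)
    finally have "a \<otimes> b = fpsi t (c1 \<otimes> c2) \<otimes> (z1 \<otimes> z2)" .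
    moreover have "c1 \<otimes> c2 \<in> A" by (rule subgroup.m_closed[OF A_sub c1(1) c2(1)])
    moreover have "z1 \<otimes> z2 \<in> grp_center G" by (rule subgroup.m_closed[OF center_subgroup c1(2) c2(2)])
    moreover have "a \<otimes> b \<in> carrier G" using c1 c2 f1 f2 z1c z2c by simp
    ultimately show "a \<otimes> b \<in> Q" unfolding Q_def by blast
  next
    fix a assume a: "a \<in> Q"
    obtain c z where c: "c \<in> A" "z \<in> grp_center G" "a = fpsi t c \<otimes> z" using a Q_def by blast
    have cc: "c \<in> carrier G" and zc: "z \<in> carrier G" using c Acar center_sub by auto
    have ic: "inv c \<in> A" by (rule subgroup.m_inv_closed[OF A_sub c(1)])
    have fc: "fpsi t c \<in> carrier G" and fic: "fpsi t (inv c) \<in> carrier G" using fA c(1) ic Acar by auto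
    have "fpsi t c \<otimes> fpsi t (inv c) = fpsi t (c \<otimes> inv c)" using f_mult[OF c(1) ic] by simp
    also have "\<dots> = \<one>" unfolding fpsi_def psi_def using cc tc by simp
    finally have ff: "fpsi t c \<otimes> fpsi t (inv c) = \<one>" .
    have "fpsi t (inv c) = inv (fpsi t c) \<otimes> (fpsi t c \<otimes> fpsi t (inv c))" using fc fic by simp
    hence "fpsi t (inv c) = inv (fpsi t c)" using ff fc by simp
    hence "inv a = fpsi t (inv c) \<otimes> inv z"
      using c(3) fc zc centerD[OF subgroup.m_inv_closed[OF center_subgroup c(2)], of "inv (fpsi t c)"]
      by (simp add: inv_mult_group)
    moreover have "inv z \<in> grp_center G" by (rule subgroup.m_inv_closed[OF center_subgroup c(2)])
    moreover have "inv a \<in> carrier G" using c fc zc by simp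
    ultimately show "inv a \<in> Q" unfolding Q_def using ic by blast
  qed
  have "S \<subseteq> Q"
  proof
    fix s assume s: "s \<in> S"
    obtain c z where cz: "c \<in> A" "z \<in> grp_center G" "s = (inv t \<otimes> c \<otimes> t) \<otimes> inv c \<otimes> z" using gens[OF s] by blast
    thus "s \<in> Q" unfolding Q_def fpsi_def psi_def using s S by blast
  qed
  hence AQ: "A \<subseteq> Q" using generate_subgroup_incl[OF _ Qsub] AS by simp
  show ?thesis
  proof
    fix h assume h: "h \<in> carrier G - A"
    have hc: "h \<in> carrier G" using h by auto
    have bA: "inv t \<otimes> h \<in> A" using A_idx[OF t h] .
    obtain c z where c: "c \<in> A" "z \<in> grp_center G" "inv t \<otimes> h = fpsi t c \<otimes> z" using AQ bA Q_def by blast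
    have cc: "c \<in> carrier G" and zc: "z \<in> carrier G" using c Acar center_sub by auto
    have he: "h = t \<otimes> (fpsi t c \<otimes> z)" using c(3)[symmetric] hc tc by simp
    have "inv c \<otimes> h \<otimes> inv (inv c) = inv c \<otimes> (t \<otimes> (inv t \<otimes> c \<otimes> t \<otimes> inv c \<otimes> z)) \<otimes> c"
      using he cc unfolding fpsi_def psi_def by simp
    also have "\<dots> = t \<otimes> inv c \<otimes> (z \<otimes> c)" using cc zc tc by (simp add: m_assoc)
    also have "\<dots> = t \<otimes> inv c \<otimes> (c \<otimes> z)" using centerD[OF c(2) cc] by simp
    also have "\<dots> = t \<otimes> z" using cc zc tc by (simp add: m_assoc)
    finally have "inv c \<otimes> h \<otimes> inv (inv c) = t \<otimes> z" .
    moreover have "inv c \<in> carrier G" using cc by simp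
    ultimately show "\<exists>c\<in>carrier G. \<exists>z \<in> grp_center G. c \<otimes> h \<otimes> inv c = t \<otimes> z"
      using c(2) by blast
  qed
qed

lemma one_from_gens:
  assumes AS: "A = generate G S" and S: "S \<subseteq> carrier G" and t: "t \<in> carrier G - A"
    and gens: "\<And>s. s \<in> S \<Longrightarrow> \<exists>c\<in>A. \<exists>z\<in>grp_center G. s = (inv t \<otimes> c \<otimes> t) \<otimes> inv c \<otimes> z"
  shows "\<exists>g0 \<in> carrier G - A. \<forall>h \<in> carrier G - A. \<exists>c\<in>carrier G. \<exists>z \<in> grp_center G. c \<otimes> h \<otimes> inv c = g0 \<otimes> z"
  using one_from_gens_t[OF AS S t gens] t by blast

end

context group
begin

lemma sub_pow: "subgroup H G \<Longrightarrow> x \<in> H \<Longrightarrow> x [^] (k::nat) \<in> H"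
proof (induction k)
  case 0 thus ?case using subgroup.one_closed by simp
next
  case (Suc k)
  have "x \<in> carrier G" using Suc.prems subgroup.subset by blast
  thus ?case using subgroup.m_closed[OF Suc.prems(1) Suc.IH[OF Suc.prems] Suc.prems(2)] by simp
qed

lemma gen_pow: "x \<in> carrier G \<Longrightarrow> x [^] (k::nat) \<in> generate G {x}"
  using sub_pow[OF generate_is_subgroup[of "{x}"]] generate.incl[of x "{x}" G] by simp

lemma conj_pow: "t \<in> carrier G \<Longrightarrow> x \<in> carrier G \<Longrightarrow> inv t \<otimes> (x [^] (k::nat)) \<otimes> t = (inv t \<otimes> x \<otimes> t) [^] k"
proof (induction k)
  case 0 thus ?case by simp
next
  case (Suc k)
  have "inv t \<otimes> (x [^] Suc k) \<otimes> t = (inv t \<otimes> (x [^] k) \<otimes> t) \<otimes> (inv t \<otimes> x \<otimes> t)"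
    using Suc.prems by (simp add: m_assoc)
  thus ?case using Suc by simp
qed

lemma pow_gen:
  assumes x: "x \<in> carrier G" and t: "t \<in> carrier G" and r: "inv t \<otimes> x \<otimes> t = inv x"
    and zj: "x [^] j \<in> grp_center G" and j: "odd (j::nat)"
  shows "\<exists>c \<in> generate G {x}. \<exists>z \<in> grp_center G. x = (inv t \<otimes> c \<otimes> t) \<otimes> inv c \<otimes> z"
proof -
  define k where "k = j div 2"
  have jk: "j = k + k + 1" using j k_def by presburger
  have c1: "inv t \<otimes> (x [^] k) \<otimes> t = inv (x [^] k)" using conj_pow[OF t x, of k] r nat_pow_inv[OF x] by simp
  have xj: "x [^] j = x [^] k \<otimes> (x [^] k \<otimes> x)" using jk x by (simp add: nat_pow_mult[symmetric] m_assoc)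
  have "(inv t \<otimes> (x [^] k) \<otimes> t) \<otimes> inv (x [^] k) \<otimes> x [^] j = x"
    using c1 xj x by (simp add: m_assoc)
  thus ?thesis using gen_pow[OF x, of k] zj by metis
qed

lemma pow_central:
  assumes gen: "generate G {x, y} = carrier G" and x: "x \<in> carrier G" and y: "y \<in> carrier G"
    and r: "inv y \<otimes> x \<otimes> y = inv x" and xx: "x [^] j \<otimes> x [^] j = \<one>"
  shows "x [^] (j::nat) \<in> grp_center G"
proof (rule gens_central[OF gen x y])
  show "x [^] j \<in> carrier G" using x by simp
  show "x [^] j \<otimes> x = x \<otimes> x [^] j" using x nat_pow_mult[OF x, of j 1] nat_pow_mult[OF x, of 1 j] by (simp add: add.commute)
  have i: "inv (x [^] j) = x [^] j" using inv_sq1[OF nat_pow_closed[OF x] xx] .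
  have "inv y \<otimes> x [^] j \<otimes> y = x [^] j" using conj_pow[OF y x, of j] r nat_pow_inv[OF x] i by simp
  hence "y \<otimes> (inv y \<otimes> x [^] j \<otimes> y) = y \<otimes> x [^] j" by simp
  thus "x [^] j \<otimes> y = y \<otimes> x [^] j" using x y by (simp add: m_assoc)
qed

end

context group
begin

lemma D_setup:
  assumes nonab: "\<exists>x \<in> carrier G. \<exists>y \<in> carrier G. x \<otimes> y \<noteq> y \<otimes> x"
    and iso: "iso_D G m"
  shows "\<exists>x y. x \<in> carrier G \<and> y \<in> carrier G \<and> generate G {x, y} = carrier G \<and> D_rel m G x y \<and>
           idx2 G (generate G {x}) \<and> y \<notin> generate G {x} \<and> inv y \<otimes> x \<otimes> y = inv x"
proof -
  obtain x y where x: "x \<in> carrier G" and y: "y \<in> carrier G" and gen: "generate G {x, y} = carrier G"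
    and R: "D_rel m G x y" using iso unfolding iso_D_def presented2_def by blast
  have yy: "y \<otimes> y = \<one>" using R y unfolding D_rel_def by (simp add: pow2)
  have iy: "inv y = y" by (rule inv_sq1[OF y yy])
  have r1: "y \<otimes> x \<otimes> inv y = inv x" using R unfolding D_rel_def by simp
  have r2: "inv y \<otimes> x \<otimes> y = inv x" using r1 iy by simp
  have I: "idx2 G (generate G {x})"
  proof (rule idx2_intro[OF nonab _ _ y gen x y])
    show "{x} \<subseteq> carrier G" using x by simp
    show "\<And>a b. a \<in> {x} \<Longrightarrow> b \<in> {x} \<Longrightarrow> a \<otimes> b = b \<otimes> a" by simp
    show "\<And>s. s \<in> {x} \<Longrightarrow> y \<otimes> s \<otimes> inv y \<in> generate G {x}" using r1 generate.inv[of x "{x}" G] by simp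
    show "\<And>s. s \<in> {x} \<Longrightarrow> inv y \<otimes> s \<otimes> y \<in> generate G {x}" using r2 generate.inv[of x "{x}" G] by simp
    show "y \<otimes> y \<in> generate G {x}" using yy generate.one[of G "{x}"] by simp
    show "x \<in> generate G {x} \<or> inv y \<otimes> x \<in> generate G {x}" using generate.incl[of x "{x}" G] by simp
    show "y \<in> generate G {x} \<or> inv y \<otimes> y \<in> generate G {x}" using y generate.one[of G "{x}"] by simp
  qed
  have "y \<notin> generate G {x}" using idx2.gen_not_A[OF I gen generate.incl[of x "{x}" G] y] by simp
  thus ?thesis using x y gen R I r2 by blast
qed


lemma T_setup:
  assumes nonab: "\<exists>x \<in> carrier G. \<exists>y \<in> carrier G. x \<otimes> y \<noteq> y \<otimes> x"
    and iso: "iso_T G m"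
  shows "\<exists>x y. x \<in> carrier G \<and> y \<in> carrier G \<and> generate G {x, y} = carrier G \<and> T_rel m G x y \<and>
           idx2 G (generate G {x}) \<and> y \<notin> generate G {x}"
proof -
  obtain x y where x: "x \<in> carrier G" and y: "y \<in> carrier G" and gen: "generate G {x, y} = carrier G"
    and R: "T_rel m G x y" using iso unfolding iso_T_def presented2_def by blast
  have yy: "y \<otimes> y = x [^] m" using R y unfolding T_rel_def by (simp add: pow2)
  have r2: "inv y \<otimes> x \<otimes> y = inv x" using R unfolding T_rel_def by simp
  have r1: "y \<otimes> x \<otimes> inv y = inv x" by (rule conj_swap[OF y x r2])
  have I: "idx2 G (generate G {x})"
  proof (rule idx2_intro[OF nonab _ _ y gen x y])
    show "{x} \<subseteq> carrier G" using x by simp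
    show "\<And>a b. a \<in> {x} \<Longrightarrow> b \<in> {x} \<Longrightarrow> a \<otimes> b = b \<otimes> a" by simp
    show "\<And>s. s \<in> {x} \<Longrightarrow> y \<otimes> s \<otimes> inv y \<in> generate G {x}" using r1 generate.inv[of x "{x}" G] by simp
    show "\<And>s. s \<in> {x} \<Longrightarrow> inv y \<otimes> s \<otimes> y \<in> generate G {x}" using r2 generate.inv[of x "{x}" G] by simp
    show "y \<otimes> y \<in> generate G {x}" using yy gen_pow[OF x] by simp
    show "x \<in> generate G {x} \<or> inv y \<otimes> x \<in> generate G {x}" using generate.incl[of x "{x}" G] by simp
    show "y \<in> generate G {x} \<or> inv y \<otimes> y \<in> generate G {x}" using y generate.one[of G "{x}"] by simp
  qed
  have "y \<notin> generate G {x}" using idx2.gen_not_A[OF I gen generate.incl[of x "{x}" G] y] by simp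
  thus ?thesis using x y gen R I by blast
qed

lemma SD_setup:
  assumes nonab: "\<exists>x \<in> carrier G. \<exists>y \<in> carrier G. x \<otimes> y \<noteq> y \<otimes> x"
    and iso: "iso_SD G m"
  shows "\<exists>x y. x \<in> carrier G \<and> y \<in> carrier G \<and> generate G {x, y} = carrier G \<and> SD_rel m G x y \<and>
           idx2 G (generate G {x}) \<and> y \<notin> generate G {x}"
proof -
  obtain x y where x: "x \<in> carrier G" and y: "y \<in> carrier G" and gen: "generate G {x, y} = carrier G"
    and R: "SD_rel m G x y" using iso unfolding iso_SD_def presented2_def by blast
  have yy: "y \<otimes> y = \<one>" using R y unfolding SD_rel_def by (simp add: pow2)
  have iy: "inv y = y" by (rule inv_sq1[OF y yy])
  have r: "y \<otimes> x \<otimes> y = x [^] (2 * m - 1)" using R unfolding SD_rel_def by simp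
  have I: "idx2 G (generate G {x})"
  proof (rule idx2_intro[OF nonab _ _ y gen x y])
    show "{x} \<subseteq> carrier G" using x by simp
    show "\<And>a b. a \<in> {x} \<Longrightarrow> b \<in> {x} \<Longrightarrow> a \<otimes> b = b \<otimes> a" by simp
    show "\<And>s. s \<in> {x} \<Longrightarrow> y \<otimes> s \<otimes> inv y \<in> generate G {x}" using r iy gen_pow[OF x] by simp
    show "\<And>s. s \<in> {x} \<Longrightarrow> inv y \<otimes> s \<otimes> y \<in> generate G {x}" using r iy gen_pow[OF x] by simp
    show "y \<otimes> y \<in> generate G {x}" using yy generate.one[of G "{x}"] by simp
    show "x \<in> generate G {x} \<or> inv y \<otimes> x \<in> generate G {x}" using generate.incl[of x "{x}" G] by simp
    show "y \<in> generate G {x} \<or> inv y \<otimes> y \<in> generate G {x}" using y generate.one[of G "{x}"] by simp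
  qed
  have "y \<notin> generate G {x}" using idx2.gen_not_A[OF I gen generate.incl[of x "{x}" G] y] by simp
  thus ?thesis using x y gen R I by blast
qed

lemma U_struct:
  assumes nonab: "\<exists>x \<in> carrier G. \<exists>y \<in> carrier G. x \<otimes> y \<noteq> y \<otimes> x"
    and x: "x \<in> carrier G" and y: "y \<in> carrier G" and gen: "generate G {x, y} = carrier G"
    and r: "inv x \<otimes> y \<otimes> x = inv y"
  shows "idx2 G (generate G {x \<otimes> x, y}) \<and> x \<notin> generate G {x \<otimes> x, y} \<and> x \<otimes> x \<in> grp_center G"
proof -
  have r1: "x \<otimes> y \<otimes> inv x = inv y" by (rule conj_swap[OF x y r])
  have a1: "y \<otimes> x = x \<otimes> inv y"
  proof -
    have "x \<otimes> (inv x \<otimes> y \<otimes> x) = x \<otimes> inv y" using r by simp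
    thus ?thesis using x y by (simp add: m_assoc)
  qed
  have a2: "inv y \<otimes> x = x \<otimes> y"
  proof -
    have "(x \<otimes> y \<otimes> inv x) \<otimes> x = inv y \<otimes> x" using r1 by simp
    thus ?thesis using x y by (simp add: m_assoc)
  qed
  have xxy: "(x \<otimes> x) \<otimes> y = y \<otimes> (x \<otimes> x)"
  proof -
    have "y \<otimes> (x \<otimes> x) = (y \<otimes> x) \<otimes> x" using x y by (simp add: m_assoc)
    also have "\<dots> = x \<otimes> (inv y \<otimes> x)" using a1 x y by (simp add: m_assoc)
    also have "\<dots> = x \<otimes> (x \<otimes> y)" using a2 by simp
    finally show ?thesis using x y by (simp add: m_assoc)
  qed
  define S where "S = {x \<otimes> x, y}"
  have Sc: "S \<subseteq> carrier G" using x y S_def by simp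
  have inS: "a \<in> S \<Longrightarrow> a \<in> generate G S" for a by (rule generate.incl)
  have I: "idx2 G (generate G S)"
  proof (rule idx2_intro[OF nonab Sc _ x gen x y])
    show "\<And>a b. a \<in> S \<Longrightarrow> b \<in> S \<Longrightarrow> a \<otimes> b = b \<otimes> a" using xxy S_def by auto
    show "\<And>s. s \<in> S \<Longrightarrow> x \<otimes> s \<otimes> inv x \<in> generate G S"
    proof -
      fix s assume s: "s \<in> S"
      show "x \<otimes> s \<otimes> inv x \<in> generate G S"
      proof (cases "s = y")
        case True thus ?thesis using r1 generate.inv[of y S G] S_def by simp
      next
        case False hence "s = x \<otimes> x" using s S_def by simp
        thus ?thesis using inS[of "x \<otimes> x"] S_def x by (simp add: m_assoc)
      qed
    qed
    show "\<And>s. s \<in> S \<Longrightarrow> inv x \<otimes> s \<otimes> x \<in> generate G S"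
    proof -
      fix s assume s: "s \<in> S"
      show "inv x \<otimes> s \<otimes> x \<in> generate G S"
      proof (cases "s = y")
        case True thus ?thesis using r generate.inv[of y S G] S_def by simp
      next
        case False hence "s = x \<otimes> x" using s S_def by simp
        thus ?thesis using inS[of "x \<otimes> x"] S_def x by (simp add: m_assoc)
      qed
    qed
    show "x \<otimes> x \<in> generate G S" using inS S_def by simp
    show "x \<in> generate G S \<or> inv x \<otimes> x \<in> generate G S" using x generate.one[of G S] by simp
    show "y \<in> generate G S \<or> inv x \<otimes> y \<in> generate G S" using inS S_def by simp
  qed
  have gen': "generate G {y, x} = carrier G" using gen by (simp add: insert_commute)
  have "x \<notin> generate G S" using idx2.gen_not_A[OF I gen' inS[of y] x] S_def by simp
  moreover have "x \<otimes> x \<in> grp_center G"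
  proof (rule gens_central[OF gen x y])
    show "x \<otimes> x \<in> carrier G" using x by simp
    show "x \<otimes> x \<otimes> x = x \<otimes> (x \<otimes> x)" using x by (simp add: m_assoc)
    show "x \<otimes> x \<otimes> y = y \<otimes> (x \<otimes> x)" by (rule xxy)
  qed
  ultimately show ?thesis using I S_def by simp
qed

lemma V_setup:
  assumes nonab: "\<exists>x \<in> carrier G. \<exists>y \<in> carrier G. x \<otimes> y \<noteq> y \<otimes> x"
    and iso: "iso_V G m"
  shows "\<exists>A. idx2 G A"
proof -
  obtain x y where x: "x \<in> carrier G" and y: "y \<in> carrier G" and gen: "generate G {x, y} = carrier G"
    and R: "V_rel m G x y" using iso unfolding iso_V_def presented2_def by blast
  have y4: "y \<otimes> y \<otimes> y \<otimes> y = \<one>" using R y unfolding V_rel_def by (simp add: pow4)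
  have R1: "y \<otimes> x = inv x \<otimes> inv y" and R2: "inv y \<otimes> x = inv x \<otimes> y" using R unfolding V_rel_def by auto
  have yxy: "y \<otimes> x \<otimes> y = inv x" using R1 x y by (simp add: m_assoc)
  have iyxiy: "inv y \<otimes> x \<otimes> inv y = inv x" using R2 x y by (simp add: m_assoc)
  have yy1: "(y \<otimes> y) \<otimes> (y \<otimes> y) = \<one>" using y4 y by (simp add: m_assoc)
  have iyy: "inv (y \<otimes> y) = y \<otimes> y" using inv_sq1[OF _ yy1] y by simp
  have c: "(y \<otimes> y) \<otimes> x \<otimes> (y \<otimes> y) = x"
  proof -
    have "(y \<otimes> y) \<otimes> x \<otimes> (y \<otimes> y) = y \<otimes> (y \<otimes> x \<otimes> y) \<otimes> y" using x y by (simp add: m_assoc)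
    also have "\<dots> = y \<otimes> (inv y \<otimes> x \<otimes> inv y) \<otimes> y" using yxy iyxiy by simp
    also have "\<dots> = x" using x y by (simp add: m_assoc)
    finally show ?thesis .
  qed
  have xyy: "x \<otimes> (y \<otimes> y) = (y \<otimes> y) \<otimes> x"
  proof -
    have "(y \<otimes> y) \<otimes> x = (y \<otimes> y) \<otimes> x \<otimes> (y \<otimes> y) \<otimes> inv (y \<otimes> y)" using x y by (simp add: m_assoc)
    also have "\<dots> = x \<otimes> (y \<otimes> y)" using c iyy by simp
    finally show ?thesis by simp
  qed
  define S where "S = {x, y \<otimes> y}"
  have Sc: "S \<subseteq> carrier G" using x y S_def by simp
  have inS: "a \<in> S \<Longrightarrow> a \<in> generate G S" for a by (rule generate.incl)
  have gyy: "y \<otimes> y \<in> generate G S" using inS S_def by simp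
  have gx: "x \<in> generate G S" using inS S_def by simp
  have sg: "subgroup (generate G S) G" by (rule generate_is_subgroup[OF Sc])
  have "idx2 G (generate G S)"
  proof (rule idx2_intro[OF nonab Sc _ y gen x y])
    show "\<And>a b. a \<in> S \<Longrightarrow> b \<in> S \<Longrightarrow> a \<otimes> b = b \<otimes> a" using xyy S_def by auto
    show "\<And>s. s \<in> S \<Longrightarrow> y \<otimes> s \<otimes> inv y \<in> generate G S"
    proof -
      fix s assume s: "s \<in> S"
      show "y \<otimes> s \<otimes> inv y \<in> generate G S"
      proof (cases "s = x")
        case True
        have "y \<otimes> x \<otimes> inv y = inv x \<otimes> inv (y \<otimes> y)" using R1 x y by (simp add: m_assoc inv_mult_group)
        moreover have "inv x \<otimes> inv (y \<otimes> y) \<in> generate G S"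
          by (rule subgroup.m_closed[OF sg subgroup.m_inv_closed[OF sg gx] subgroup.m_inv_closed[OF sg gyy]])
        ultimately show ?thesis using True by simp
      next
        case False hence "s = y \<otimes> y" using s S_def by simp
        thus ?thesis using gyy y by (simp add: m_assoc)
      qed
    qed
    show "\<And>s. s \<in> S \<Longrightarrow> inv y \<otimes> s \<otimes> y \<in> generate G S"
    proof -
      fix s assume s: "s \<in> S"
      show "inv y \<otimes> s \<otimes> y \<in> generate G S"
      proof (cases "s = x")
        case True
        have "inv y \<otimes> x \<otimes> y = inv x \<otimes> (y \<otimes> y)" using R2 x y by (simp add: m_assoc)
        moreover have "inv x \<otimes> (y \<otimes> y) \<in> generate G S"
          by (rule subgroup.m_closed[OF sg subgroup.m_inv_closed[OF sg gx] gyy])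
        ultimately show ?thesis using True by simp
      next
        case False hence "s = y \<otimes> y" using s S_def by simp
        thus ?thesis using gyy y by (simp add: m_assoc)
      qed
    qed
    show "y \<otimes> y \<in> generate G S" by (rule gyy)
    show "x \<in> generate G S \<or> inv y \<otimes> x \<in> generate G S" using gx by simp
    show "y \<in> generate G S \<or> inv y \<otimes> y \<in> generate G S" using y generate.one[of G S] by simp
  qed
  thus ?thesis by blast
qed

end

context group
begin

lemma D_idx:
  assumes x: "x \<in> carrier G" and y: "y \<in> carrier G" and gen: "generate G {x, y} = carrier G"
    and R: "D_rel m G x y"
  shows "\<And>g h. g \<in> carrier G - generate G {x} \<Longrightarrow> h \<in> carrier G - generate G {x} \<Longrightarrow> inv g \<otimes> h \<in> generate G {x}"
proof -
  have yy: "y \<otimes> y = \<one>" using R y unfolding D_rel_def by (simp add: pow2)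
  have iy: "inv y = y" by (rule inv_sq1[OF y yy])
  have r1: "y \<otimes> x \<otimes> inv y = inv x" using R unfolding D_rel_def by simp
  have r2: "inv y \<otimes> x \<otimes> y = inv x" using r1 iy by simp
  show "\<And>g h. g \<in> carrier G - generate G {x} \<Longrightarrow> h \<in> carrier G - generate G {x} \<Longrightarrow> inv g \<otimes> h \<in> generate G {x}"
  proof (rule gen_idx2[OF _ y gen x y])
    show "{x} \<subseteq> carrier G" using x by simp
    show "\<And>s. s \<in> {x} \<Longrightarrow> y \<otimes> s \<otimes> inv y \<in> generate G {x}" using r1 generate.inv[of x "{x}" G] by simp
    show "\<And>s. s \<in> {x} \<Longrightarrow> inv y \<otimes> s \<otimes> y \<in> generate G {x}" using r2 generate.inv[of x "{x}" G] by simp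
    show "y \<otimes> y \<in> generate G {x}" using yy generate.one[of G "{x}"] by simp
    show "x \<in> generate G {x} \<or> inv y \<otimes> x \<in> generate G {x}" using generate.incl[of x "{x}" G] by simp
    show "y \<in> generate G {x} \<or> inv y \<otimes> y \<in> generate G {x}" using y generate.one[of G "{x}"] by simp
  qed
qed

lemma quot_hom: "group_hom G (G Mod grp_center G) (\<lambda>g. grp_center G #> g)"
proof (intro group_hom.intro group_hom_axioms.intro)
  show "group G" by (rule is_group)
  show "group (G Mod grp_center G)" by (rule normal.factorgroup_is_group[OF center_normal])
  show "(#>) (grp_center G) \<in> hom G (G Mod grp_center G)" by (rule normal.r_coset_hom_Mod[OF center_normal])
qed

lemma QD_setup:
  assumes nonab: "\<exists>x \<in> carrier G. \<exists>y \<in> carrier G. x \<otimes> y \<noteq> y \<otimes> x"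
    and iso: "iso_D (G Mod grp_center G) m"
  shows "\<exists>A. idx2 G A"
proof -
  define N where "N = grp_center G"
  define GZ where "GZ = G Mod N"
  define h where "h = (\<lambda>g. N #> g)"
  interpret H: group_hom G GZ h using quot_hom unfolding GZ_def h_def N_def .
  have NG: "subgroup N G" using center_subgroup N_def by simp
  obtain X0 Y0 where X0: "X0 \<in> carrier GZ" and Y0: "Y0 \<in> carrier GZ"
    and gen: "generate GZ {X0, Y0} = carrier GZ" and R: "D_rel m GZ X0 Y0"
    using iso unfolding iso_D_def presented2_def GZ_def N_def by blast
  define Ab where "Ab = generate GZ {X0}"
  have Abs: "subgroup Ab GZ" unfolding Ab_def using H.H.generate_is_subgroup X0 by simp
  have idxq: "\<And>g h. g \<in> carrier GZ - Ab \<Longrightarrow> h \<in> carrier GZ - Ab \<Longrightarrow> inv\<^bsub>GZ\<^esub> g \<otimes>\<^bsub>GZ\<^esub> h \<in> Ab"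
    using H.H.D_idx[OF X0 Y0 gen R] unfolding Ab_def by blast
  obtain w where w: "w \<in> carrier G" and X0w: "X0 = h w"
    using X0 unfolding GZ_def h_def carrier_FactGroup by blast
  define A where "A = {g \<in> carrier G. h g \<in> Ab}"
  have Asub: "subgroup A G"
  proof (rule subgroupI')
    show "A \<subseteq> carrier G" unfolding A_def by blast
    show "\<one> \<in> A" unfolding A_def using subgroup.one_closed[OF Abs] by simp
  next
    fix a b assume a: "a \<in> A" and b: "b \<in> A"
    have "h (a \<otimes> b) = h a \<otimes>\<^bsub>GZ\<^esub> h b" using a b A_def by simp
    thus "a \<otimes> b \<in> A" using subgroup.m_closed[OF Abs, of "h a" "h b"] a b A_def by simp
  next
    fix a assume a: "a \<in> A"
    have "h (inv a) = inv\<^bsub>GZ\<^esub> (h a)" using a A_def by simp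
    thus "inv a \<in> A" using subgroup.m_inv_closed[OF Abs, of "h a"] a A_def by simp
  qed
  define B where "B = generate G (insert w N)"
  have Bc: "insert w N \<subseteq> carrier G" using w NG subgroup.subset by blast
  have Bcomm: "\<And>a b. a \<in> B \<Longrightarrow> b \<in> B \<Longrightarrow> a \<otimes> b = b \<otimes> a"
    unfolding B_def
  proof (rule gen_comm[OF Bc])
    fix a b assume a: "a \<in> insert w N" and b: "b \<in> insert w N"
    show "a \<otimes> b = b \<otimes> a"
    proof (cases "a = w")
      case True
      show ?thesis
      proof (cases "b = w")
        case True thus ?thesis using \<open>a = w\<close> by simp
      next
        case False hence "b \<in> N" using b by simp
        thus ?thesis using centerD[of b a] True w N_def by simp
      qed
    next
      case False hence aN: "a \<in> N" using a by simp
      have "b \<in> carrier G" using b Bc by blast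
      thus ?thesis using centerD[of a b] aN N_def by simp
    qed
  qed
  have Bs: "subgroup B G" unfolding B_def by (rule generate_is_subgroup[OF Bc])
  have hB: "subgroup (h ` B) GZ" by (rule H.subgroup_img_is_subgroup[OF Bs])
  have "X0 \<in> h ` B" using X0w generate.incl[of w "insert w N" G] B_def by blast
  hence AbhB: "Ab \<subseteq> h ` B" unfolding Ab_def using H.H.generate_subgroup_incl[OF _ hB] by simp
  have AB: "A \<subseteq> B"
  proof
    fix a assume a: "a \<in> A"
    then obtain b where b: "b \<in> B" "h a = h b" using AbhB A_def by blast
    have ac: "a \<in> carrier G" using a A_def by simp
    have bc: "b \<in> carrier G" using b Bs subgroup.subset by blast
    have "a \<in> N #> b" using rcos_self[OF ac NG] b(2) h_def by simp
    then obtain n where n: "n \<in> N" "a = n \<otimes> b" unfolding r_coset_def by blast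
    have "n \<in> B" using n(1) generate.incl[of n "insert w N" G] B_def by simp
    thus "a \<in> B" using subgroup.m_closed[OF Bs _ b(1)] n by simp
  qed
  have "idx2 G A"
  proof (intro idx2.intro idx2_axioms.intro)
    show "group G" by (rule is_group)
    show "subgroup A G" by (rule Asub)
    show "\<And>a b. a \<in> A \<Longrightarrow> b \<in> A \<Longrightarrow> a \<otimes> b = b \<otimes> a" using Bcomm AB by blast
    show "\<exists>x \<in> carrier G. \<exists>y \<in> carrier G. x \<otimes> y \<noteq> y \<otimes> x" by (rule nonab)
    fix g k assume g: "g \<in> carrier G - A" and k: "k \<in> carrier G - A"
    have hg: "h g \<in> carrier GZ - Ab" and hk: "h k \<in> carrier GZ - Ab" using g k A_def by auto
    have "inv\<^bsub>GZ\<^esub> (h g) \<otimes>\<^bsub>GZ\<^esub> h k \<in> Ab" by (rule idxq[OF hg hk])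
    moreover have "h (inv g \<otimes> k) = inv\<^bsub>GZ\<^esub> (h g) \<otimes>\<^bsub>GZ\<^esub> h k" using g k by simp
    ultimately show "inv g \<otimes> k \<in> A" using g k A_def by simp
  qed
  thus ?thesis by blast
qed

end

context idx2
begin

lemma L_int: "finite (carrier G) \<Longrightarrow> graph_L_integral (nccc_vertices G) (nccc_adj G)"
  by (rule L_integral_CA[OF _ CA])

lemma Q_int:
  assumes fin: "finite (carrier G)"
    and one: "\<exists>g0 \<in> carrier G - A. \<forall>h \<in> carrier G - A. \<exists>c\<in>carrier G. \<exists>z \<in> grp_center G. c \<otimes> h \<otimes> inv c = g0 \<otimes> z"
  shows "graph_Q_integral (nccc_vertices G) (nccc_adj G)"
  unfolding graph_Q_integral_def
  by (rule mpart.Q_integral_2[OF mpart_CA[OF fin CA] tri[OF one]])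

end

context group
begin

lemma D_Q:
  assumes nonab: "\<exists>x \<in> carrier G. \<exists>y \<in> carrier G. x \<otimes> y \<noteq> y \<otimes> x"
    and iso: "iso_D G m" and fin: "finite (carrier G)"
    and mc: "odd m \<or> (even m \<and> odd (m div 2))"
  shows "graph_Q_integral (nccc_vertices G) (nccc_adj G)"
proof -
  obtain x y where x: "x \<in> carrier G" and y: "y \<in> carrier G" and gen: "generate G {x, y} = carrier G"
    and R: "D_rel m G x y" and I: "idx2 G (generate G {x})" and yA: "y \<notin> generate G {x}"
    and r2: "inv y \<otimes> x \<otimes> y = inv x"
    using D_setup[OF nonab iso] by blast
  have xm: "x [^] m = \<one>" using R unfolding D_rel_def by simp
  define j where "j = (if odd m then m else m div 2)"
  have oj: "odd j" using mc j_def by auto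
  have zj: "x [^] j \<in> grp_center G"
  proof (cases "odd m")
    case True thus ?thesis using xm j_def subgroup.one_closed[OF center_subgroup] by simp
  next
    case False
    hence m2: "m = j + j" using j_def by auto
    have "x [^] j \<otimes> x [^] j = \<one>" using xm m2 nat_pow_mult[OF x] by simp
    thus ?thesis by (rule pow_central[OF gen x y r2])
  qed
  obtain c z where c: "c \<in> generate G {x}" and z: "z \<in> grp_center G"
    and e: "x = (inv y \<otimes> c \<otimes> y) \<otimes> inv c \<otimes> z" using pow_gen[OF x y r2 zj oj] by blast
  have one: "\<exists>g0 \<in> carrier G - generate G {x}. \<forall>h \<in> carrier G - generate G {x}. \<exists>c\<in>carrier G. \<exists>z \<in> grp_center G. c \<otimes> h \<otimes> inv c = g0 \<otimes> z"
    by (rule idx2.one_from_gens[OF I refl _ _, of y]) (use x y yA c z e in auto)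
  show ?thesis by (rule idx2.Q_int[OF I fin one])
qed

lemma T_Q:
  assumes nonab: "\<exists>x \<in> carrier G. \<exists>y \<in> carrier G. x \<otimes> y \<noteq> y \<otimes> x"
    and iso: "iso_T G m" and fin: "finite (carrier G)" and mc: "odd m"
  shows "graph_Q_integral (nccc_vertices G) (nccc_adj G)"
proof -
  obtain x y where x: "x \<in> carrier G" and y: "y \<in> carrier G" and gen: "generate G {x, y} = carrier G"
    and R: "T_rel m G x y" and I: "idx2 G (generate G {x})" and yA: "y \<notin> generate G {x}"
    using T_setup[OF nonab iso] by blast
  have r2: "inv y \<otimes> x \<otimes> y = inv x" using R unfolding T_rel_def by simp
  have x2m: "x [^] (2 * m) = \<one>" using R unfolding T_rel_def by simp
  have "x [^] m \<otimes> x [^] m = \<one>" using x2m nat_pow_mult[OF x, of m m] by (simp add: mult_2)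
  hence zj: "x [^] m \<in> grp_center G" by (rule pow_central[OF gen x y r2])
  obtain c z where c: "c \<in> generate G {x}" and z: "z \<in> grp_center G"
    and e: "x = (inv y \<otimes> c \<otimes> y) \<otimes> inv c \<otimes> z" using pow_gen[OF x y r2 zj mc] by blast
  have one: "\<exists>g0 \<in> carrier G - generate G {x}. \<forall>h \<in> carrier G - generate G {x}. \<exists>c\<in>carrier G. \<exists>z \<in> grp_center G. c \<otimes> h \<otimes> inv c = g0 \<otimes> z"
    by (rule idx2.one_from_gens[OF I refl _ _, of y]) (use x y yA c z e in auto)
  show ?thesis by (rule idx2.Q_int[OF I fin one])
qed

lemma SD_Q:
  assumes nonab: "\<exists>x \<in> carrier G. \<exists>y \<in> carrier G. x \<otimes> y \<noteq> y \<otimes> x"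
    and iso: "iso_SD G m" and fin: "finite (carrier G)" and mc: "odd m" and m3: "m \<ge> 3"
  shows "graph_Q_integral (nccc_vertices G) (nccc_adj G)"
proof -
  obtain x y where x: "x \<in> carrier G" and y: "y \<in> carrier G" and gen: "generate G {x, y} = carrier G"
    and R: "SD_rel m G x y" and I: "idx2 G (generate G {x})" and yA: "y \<notin> generate G {x}"
    using SD_setup[OF nonab iso] by blast
  have yy: "y \<otimes> y = \<one>" using R y unfolding SD_rel_def by (simp add: pow2)
  have iy: "inv y = y" by (rule inv_sq1[OF y yy])
  have r: "inv y \<otimes> x \<otimes> y = x [^] (2 * m - 1)" using R iy unfolding SD_rel_def by simp
  have x4m: "x [^] (4 * m) = \<one>" using R unfolding SD_rel_def by simp
  obtain r0 where mr: "m = 2 * r0 + 1" using mc oddE by blast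
  have r0: "r0 \<ge> 1" using mr m3 by simp
  have e1: "(2 * m - 1) * m = m + 4 * m * r0" using mr by (simp add: algebra_simps)
  have "inv y \<otimes> x [^] m \<otimes> y = x [^] ((2 * m - 1) * m)" using conj_pow[OF y x, of m] r nat_pow_pow[OF x] by simp
  also have "\<dots> = x [^] m \<otimes> (x [^] (4 * m)) [^] r0" using e1 nat_pow_mult[OF x] nat_pow_pow[OF x] by simp
  also have "\<dots> = x [^] m" using x4m x by simp
  finally have cm: "inv y \<otimes> x [^] m \<otimes> y = x [^] m" .
  have zm: "x [^] m \<in> grp_center G"
  proof (rule gens_central[OF gen x y])
    show "x [^] m \<in> carrier G" using x by simp
    show "x [^] m \<otimes> x = x \<otimes> x [^] m" using x nat_pow_mult[OF x, of m 1] nat_pow_mult[OF x, of 1 m] by (simp add: add.commute)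
    have "y \<otimes> (inv y \<otimes> x [^] m \<otimes> y) = y \<otimes> x [^] m" using cm by simp
    thus "x [^] m \<otimes> y = y \<otimes> x [^] m" using x y by (simp add: m_assoc)
  qed
  define M where "M = m * (m - 2)"
  have zM: "inv (x [^] M) \<in> grp_center G"
  proof -
    have "x [^] M = (x [^] m) [^] (m - 2)" using nat_pow_pow[OF x] M_def by simp
    hence "x [^] M \<in> grp_center G" using sub_pow[OF center_subgroup zm] by simp
    thus ?thesis by (rule subgroup.m_inv_closed[OF center_subgroup])
  qed
  have ar: "(2 * m - 1) * r0 = (1 + M) + r0"
  proof -
    obtain s where s: "r0 = Suc s" using r0 by (cases r0) auto
    show ?thesis unfolding M_def using mr s by (simp add: algebra_simps)
  qed
  have pc0: "inv y \<otimes> x [^] r0 \<otimes> y = x [^] ((2 * m - 1) * r0)"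
    using conj_pow[OF y x, of r0] r nat_pow_pow[OF x] by simp
  have pc: "inv y \<otimes> x [^] r0 \<otimes> y = x [^] (1 + M) \<otimes> x [^] r0"
    unfolding pc0 ar by (rule nat_pow_mult[OF x, symmetric])
  have x1M: "x [^] (1 + M) = x \<otimes> x [^] M" using nat_pow_mult[OF x, of 1 M] x by simp
  have e: "x = (inv y \<otimes> x [^] r0 \<otimes> y) \<otimes> inv (x [^] r0) \<otimes> inv (x [^] M)"
    using pc x1M x by (simp add: m_assoc)
  have one: "\<exists>g0 \<in> carrier G - generate G {x}. \<forall>h \<in> carrier G - generate G {x}. \<exists>c\<in>carrier G. \<exists>z \<in> grp_center G. c \<otimes> h \<otimes> inv c = g0 \<otimes> z"
    by (rule idx2.one_from_gens[OF I refl _ _, of y]) (use x y yA gen_pow[OF x, of r0] zM e in auto)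
  show ?thesis by (rule idx2.Q_int[OF I fin one])
qed

lemma U_Q:
  assumes nonab: "\<exists>x \<in> carrier G. \<exists>y \<in> carrier G. x \<otimes> y \<noteq> y \<otimes> x"
    and iso: "iso_U G n m" and fin: "finite (carrier G)"
    and mc: "odd m \<or> (even m \<and> odd (m div 2))"
  shows "graph_Q_integral (nccc_vertices G) (nccc_adj G)"
proof -
  obtain x y where x: "x \<in> carrier G" and y: "y \<in> carrier G" and gen: "generate G {x, y} = carrier G"
    and R: "U_rel n m G x y" using iso unfolding iso_U_def presented2_def by blast
  have r: "inv x \<otimes> y \<otimes> x = inv y" using R unfolding U_rel_def by simp
  have ym: "y [^] m = \<one>" using R unfolding U_rel_def by simp
  have U: "idx2 G (generate G {x \<otimes> x, y}) \<and> x \<notin> generate G {x \<otimes> x, y} \<and> x \<otimes> x \<in> grp_center G"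
    by (rule U_struct[OF nonab x y gen r])
  hence I: "idx2 G (generate G {x \<otimes> x, y})" and xA: "x \<notin> generate G {x \<otimes> x, y}"
    and xxZ: "x \<otimes> x \<in> grp_center G" by auto
  have gen': "generate G {y, x} = carrier G" using gen by (simp add: insert_commute)
  define j where "j = (if odd m then m else m div 2)"
  have oj: "odd j" using mc j_def by auto
  have zj: "y [^] j \<in> grp_center G"
  proof (cases "odd m")
    case True thus ?thesis using ym j_def subgroup.one_closed[OF center_subgroup] by simp
  next
    case False
    hence m2: "m = j + j" using j_def by auto
    have "y [^] j \<otimes> y [^] j = \<one>" using ym m2 nat_pow_mult[OF y] by simp
    thus ?thesis by (rule pow_central[OF gen' y x r])
  qed
  obtain c z where c: "c \<in> generate G {y}" and z: "z \<in> grp_center G"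
    and e: "y = (inv x \<otimes> c \<otimes> x) \<otimes> inv c \<otimes> z" using pow_gen[OF y x r zj oj] by blast
  have cA: "c \<in> generate G {x \<otimes> x, y}" using c mono_generate[of "{y}" "{x \<otimes> x, y}"] by auto
  have oneA: "\<one> \<in> generate G {x \<otimes> x, y}" by (rule generate.one)
  have exx: "x \<otimes> x = (inv x \<otimes> \<one> \<otimes> x) \<otimes> inv \<one> \<otimes> (x \<otimes> x)" using x by simp
  have one: "\<exists>g0 \<in> carrier G - generate G {x \<otimes> x, y}. \<forall>h \<in> carrier G - generate G {x \<otimes> x, y}. \<exists>c\<in>carrier G. \<exists>z \<in> grp_center G. c \<otimes> h \<otimes> inv c = g0 \<otimes> z"
  proof (rule idx2.one_from_gens[OF I refl _ _, of x])
    show "{x \<otimes> x, y} \<subseteq> carrier G" using x y by simp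
    show "x \<in> carrier G - generate G {x \<otimes> x, y}" using x xA by simp
    fix s assume s: "s \<in> {x \<otimes> x, y}"
    show "\<exists>c\<in>generate G {x \<otimes> x, y}. \<exists>z\<in>grp_center G. s = inv x \<otimes> c \<otimes> x \<otimes> inv c \<otimes> z"
    proof (cases "s = y")
      case True thus ?thesis using cA z e by blast
    next
      case False hence "s = x \<otimes> x" using s by simp
      thus ?thesis using oneA xxZ exx by blast
    qed
  qed
  show ?thesis by (rule idx2.Q_int[OF I fin one])
qed

end

context group
begin

lemma U6_all:
  assumes nonab: "\<exists>x \<in> carrier G. \<exists>y \<in> carrier G. x \<otimes> y \<noteq> y \<otimes> x"
    and iso: "iso_U6 G m" and fin: "finite (carrier G)"
  shows "graph_integral (nccc_vertices G) (nccc_adj G) \<and> graph_L_integral (nccc_vertices G) (nccc_adj G)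
      \<and> graph_Q_integral (nccc_vertices G) (nccc_adj G)"
proof -
  obtain x y where x: "x \<in> carrier G" and y: "y \<in> carrier G" and gen: "generate G {x, y} = carrier G"
    and R: "U6_rel m G x y" using iso unfolding iso_U6_def presented2_def by blast
  have r: "inv x \<otimes> y \<otimes> x = inv y" using R unfolding U6_rel_def by simp
  have y3: "y \<otimes> y \<otimes> y = \<one>" using R y unfolding U6_rel_def by (simp add: pow3)
  have U: "idx2 G (generate G {x \<otimes> x, y}) \<and> x \<notin> generate G {x \<otimes> x, y} \<and> x \<otimes> x \<in> grp_center G"
    by (rule U_struct[OF nonab x y gen r])
  define A where "A = generate G {x \<otimes> x, y}"
  have I: "idx2 G A" and xA: "x \<notin> A" and xxZ: "x \<otimes> x \<in> grp_center G" using U A_def by auto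
  have Asub: "subgroup A G" using idx2.A_sub[OF I] .
  have yA: "y \<in> A" unfolding A_def by (rule generate.incl) simp
  have ZA: "grp_center G \<subseteq> A" using idx2.Z_sub_A[OF I] .
  have Acar: "A \<subseteq> carrier G" using subgroup.subset[OF Asub] .
  have yZ: "y \<notin> grp_center G"
  proof
    assume yz: "y \<in> grp_center G"
    have xz: "x \<in> grp_center G" using gens_central[OF gen x y x] centerD[OF yz x] by simp
    obtain a b where a: "a \<in> carrier G" and b: "b \<in> carrier G" and ab: "a \<otimes> b \<noteq> b \<otimes> a" using nonab by blast
    have "a \<in> grp_center G" using gens_central[OF gen x y a] centerD[OF xz a] centerD[OF yz a] by simp
    thus False using centerD[OF _ b] ab by simp
  qed
  have iy: "inv y = y \<otimes> y"
  proof -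
    have "inv y = inv y \<otimes> (y \<otimes> y \<otimes> y)" using y3 y by simp
    also have "\<dots> = y \<otimes> y" using y by (simp add: m_assoc)
    finally show ?thesis .
  qed
  have iyiy: "inv y \<otimes> inv y = y"
  proof -
    have "inv y \<otimes> inv y = inv (y \<otimes> y)" using y by (simp add: inv_mult_group)
    also have "\<dots> = y" using iy[symmetric] y by simp
    finally show ?thesis .
  qed
  have r1: "x \<otimes> y \<otimes> inv x = inv y" by (rule conj_swap[OF x y r])
  have r1': "x \<otimes> inv y \<otimes> inv x = y"
  proof -
    have "x \<otimes> inv y \<otimes> inv x = inv (x \<otimes> y \<otimes> inv x)" using x y by (simp add: inv_mult_group m_assoc)
    thus ?thesis using r1 y by simp
  qed
  have a1: "y \<otimes> x = x \<otimes> inv y"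
  proof -
    have "x \<otimes> (inv x \<otimes> y \<otimes> x) = x \<otimes> inv y" using r by simp
    thus ?thesis using x y by (simp add: m_assoc)
  qed
  have a2: "inv y \<otimes> x = x \<otimes> y"
  proof -
    have "(x \<otimes> y \<otimes> inv x) \<otimes> x = inv y \<otimes> x" using r1 by simp
    thus ?thesis using x y by (simp add: m_assoc)
  qed
  define U3 where "U3 = {\<one>, y, inv y}"
  have U3c: "U3 \<subseteq> carrier G" using y U3_def by auto
  have U3m: "u \<otimes> v \<in> U3" if "u \<in> U3" "v \<in> U3" for u v
    using that y iyiy iy[symmetric] unfolding U3_def by auto
  have U3i: "inv u \<in> U3" if "u \<in> U3" for u
    using that y unfolding U3_def by auto
  define W where "W = {a. \<exists>u\<in>U3. \<exists>z\<in>grp_center G. a = u \<otimes> z}"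
  have Wsub: "subgroup W G"
  proof (rule subgroupI')
    show "W \<subseteq> carrier G" using U3c center_sub unfolding W_def by blast
    have "\<one> = \<one> \<otimes> \<one>" by simp
    thus "\<one> \<in> W" unfolding W_def U3_def using subgroup.one_closed[OF center_subgroup] by blast
  next
    fix a b assume a: "a \<in> W" and b: "b \<in> W"
    obtain u z1 where u: "u \<in> U3" "z1 \<in> grp_center G" "a = u \<otimes> z1" using a W_def by blast
    obtain v z2 where v: "v \<in> U3" "z2 \<in> grp_center G" "b = v \<otimes> z2" using b W_def by blast
    have uc: "u \<in> carrier G" and vc: "v \<in> carrier G" using u v U3c by auto
    have z1c: "z1 \<in> carrier G" and z2c: "z2 \<in> carrier G" using u v center_sub by auto
    have "a \<otimes> b = u \<otimes> (z1 \<otimes> v) \<otimes> z2" using u v uc vc z1c z2c by (simp add: m_assoc)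
    also have "\<dots> = u \<otimes> (v \<otimes> z1) \<otimes> z2" using centerD[OF u(2) vc] by simp
    also have "\<dots> = (u \<otimes> v) \<otimes> (z1 \<otimes> z2)" using uc vc z1c z2c by (simp add: m_assoc)
    finally show "a \<otimes> b \<in> W" unfolding W_def
      using U3m[OF u(1) v(1)] subgroup.m_closed[OF center_subgroup u(2) v(2)] by blast
  next
    fix a assume a: "a \<in> W"
    obtain u z where u: "u \<in> U3" "z \<in> grp_center G" "a = u \<otimes> z" using a W_def by blast
    have uc: "u \<in> carrier G" and zc: "z \<in> carrier G" using u U3c center_sub by auto
    have izZ: "inv z \<in> grp_center G" by (rule subgroup.m_inv_closed[OF center_subgroup u(2)])
    have "inv a = inv z \<otimes> inv u" using u uc zc by (simp add: inv_mult_group)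
    also have "\<dots> = inv u \<otimes> inv z" using centerD[OF izZ] uc by simp
    finally show "inv a \<in> W" unfolding W_def using U3i[OF u(1)] izZ by blast
  qed
  have AW: "A \<subseteq> W"
  proof -
    have "x \<otimes> x = \<one> \<otimes> (x \<otimes> x)" using x by simp
    hence "x \<otimes> x \<in> W" unfolding W_def U3_def using xxZ by blast
    moreover have "y = y \<otimes> \<one>" using y by simp
    hence "y \<in> W" unfolding W_def U3_def using subgroup.one_closed[OF center_subgroup] by blast
    ultimately have "{x \<otimes> x, y} \<subseteq> W" by simp
    thus ?thesis unfolding A_def by (rule generate_subgroup_incl[OF _ Wsub])
  qed
  have E2: "c \<otimes> y \<otimes> inv c = y \<or> c \<otimes> y \<otimes> inv c = inv y" if c: "c \<in> carrier G" for c
  proof (cases "c \<in> A")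
    case True
    have "c \<otimes> y = y \<otimes> c" using idx2.A_comm[OF I True yA] .
    hence "c \<otimes> y \<otimes> inv c = y" using c y by (simp add: m_assoc)
    thus ?thesis by simp
  next
    case False
    define a where "a = inv x \<otimes> c"
    have aA: "a \<in> A" unfolding a_def using idx2.A_idx[OF I, of x c] x xA c False by simp
    have ac: "a \<in> carrier G" using aA Acar by auto
    have ce: "c = x \<otimes> a" unfolding a_def using x c by simp
    have "a \<otimes> y = y \<otimes> a" using idx2.A_comm[OF I aA yA] .
    hence "c \<otimes> y \<otimes> inv c = x \<otimes> y \<otimes> inv x" using ce x y ac by (simp add: m_assoc inv_mult_group)
    thus ?thesis using r1 by simp
  qed
  have E4A: "u = \<one>" if a: "a \<in> A" and u: "u \<in> grp_center G" and e: "a \<otimes> x \<otimes> inv a = x \<otimes> u" for a u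
  proof -
    obtain v z where v: "v \<in> U3" "z \<in> grp_center G" "a = v \<otimes> z" using AW a W_def by blast
    have vc: "v \<in> carrier G" and zc: "z \<in> carrier G" using v U3c center_sub by auto
    have uc: "u \<in> carrier G" using u center_sub by auto
    have "a \<otimes> x \<otimes> inv a = v \<otimes> (z \<otimes> x) \<otimes> inv z \<otimes> inv v" using v(3) vc zc x by (simp add: m_assoc inv_mult_group)
    also have "\<dots> = v \<otimes> x \<otimes> inv v" using centerD[OF v(2) x] vc zc x by (simp add: m_assoc)
    finally have e2: "v \<otimes> x \<otimes> inv v = x \<otimes> u" using e by simp
    show ?thesis
    proof (cases "v = \<one>")
      case True thus ?thesis using e2 x uc by simp
    next
      case False
      hence "v = y \<or> v = inv y" using v(1) U3_def by auto
      thus ?thesis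
      proof
        assume vy: "v = y"
        have "y \<otimes> x \<otimes> inv y = x \<otimes> (inv y \<otimes> inv y)" using a1 x y by (simp add: m_assoc)
        hence "x \<otimes> y = x \<otimes> u" using e2 vy iyiy by simp
        hence "y = u" using x y uc by simp
        thus ?thesis using yZ u by simp
      next
        assume vy: "v = inv y"
        have "inv y \<otimes> x \<otimes> inv (inv y) = x \<otimes> (y \<otimes> y)" using a2 x y by (simp add: m_assoc)
        hence "x \<otimes> inv y = x \<otimes> u" using e2 vy iy by simp
        hence "inv y = u" using x y uc by simp
        hence "inv (inv y) \<in> grp_center G" using u subgroup.m_inv_closed[OF center_subgroup] by simp
        thus ?thesis using yZ y by simp
      qed
    qed
  qed
  have E4: "u = \<one>" if c: "c \<in> carrier G" and u: "u \<in> grp_center G" and e: "c \<otimes> x \<otimes> inv c = x \<otimes> u" for c u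
  proof (cases "c \<in> A")
    case True thus ?thesis using E4A u e by blast
  next
    case False
    define a where "a = inv x \<otimes> c"
    have aA: "a \<in> A" unfolding a_def using idx2.A_idx[OF I, of x c] x xA c False by simp
    have ac: "a \<in> carrier G" using aA Acar by auto
    have uc: "u \<in> carrier G" using u center_sub by auto
    have ce: "c = x \<otimes> a" unfolding a_def using x c by simp
    have "c \<otimes> x \<otimes> inv c = x \<otimes> (a \<otimes> x \<otimes> inv a) \<otimes> inv x" using ce x ac by (simp add: m_assoc inv_mult_group)
    hence "x \<otimes> (a \<otimes> x \<otimes> inv a) \<otimes> inv x = x \<otimes> u" using e by simp
    hence "inv x \<otimes> (x \<otimes> (a \<otimes> x \<otimes> inv a) \<otimes> inv x) \<otimes> x = inv x \<otimes> (x \<otimes> u) \<otimes> x" by simp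
    hence "a \<otimes> x \<otimes> inv a = u \<otimes> x" using x ac uc by (simp add: m_assoc)
    hence "a \<otimes> x \<otimes> inv a = x \<otimes> u" using centerD[OF u x] by simp
    thus ?thesis using E4A[OF aA u] by simp
  qed
  have gen': "generate G {y, x} = carrier G" using gen by (simp add: insert_commute)
  have zj: "y [^] (3::nat) \<in> grp_center G" using R subgroup.one_closed[OF center_subgroup] unfolding U6_rel_def by simp
  obtain c0 z0 where c0: "c0 \<in> generate G {y}" and z0: "z0 \<in> grp_center G"
    and e0: "y = (inv x \<otimes> c0 \<otimes> x) \<otimes> inv c0 \<otimes> z0" using pow_gen[OF y x r zj] by auto
  have cA: "c0 \<in> A" using c0 mono_generate[of "{y}" "{x \<otimes> x, y}"] A_def by auto
  have exx: "x \<otimes> x = (inv x \<otimes> \<one> \<otimes> x) \<otimes> inv \<one> \<otimes> (x \<otimes> x)" using x by simp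
  have onet: "\<forall>h \<in> carrier G - A. \<exists>c\<in>carrier G. \<exists>z \<in> grp_center G. c \<otimes> h \<otimes> inv c = x \<otimes> z"
  proof (rule idx2.one_from_gens_t[OF I A_def])
    show "{x \<otimes> x, y} \<subseteq> carrier G" using x y by simp
    show "x \<in> carrier G - A" using x xA by simp
    fix s assume s: "s \<in> {x \<otimes> x, y}"
    show "\<exists>c\<in>A. \<exists>z\<in>grp_center G. s = inv x \<otimes> c \<otimes> x \<otimes> inv c \<otimes> z"
    proof (cases "s = y")
      case True thus ?thesis using cA z0 e0 by blast
    next
      case False hence "s = x \<otimes> x" using s by simp
      thus ?thesis using subgroup.one_closed[OF Asub] xxZ exx by blast
    qed
  qed
  have one: "\<exists>g0 \<in> carrier G - A. \<forall>h \<in> carrier G - A. \<exists>c\<in>carrier G. \<exists>z \<in> grp_center G. c \<otimes> h \<otimes> inv c = g0 \<otimes> z"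
    using onet x xA by blast
  define V where "V = nccc_vertices G"
  define VA where "VA = {K \<in> V. \<exists>a\<in>K. a \<in> A}"
  define VO where "VO = V - VA"
  have cls: "k \<in> A \<longleftrightarrow> K \<in> VA" if K: "K \<in> V" and k: "k \<in> K" for K k
  proof
    assume "k \<in> A" thus "K \<in> VA" using K k VA_def by blast
  next
    assume "K \<in> VA"
    then obtain a where a: "a \<in> K" "a \<in> A" using VA_def by blast
    have "K = conj_class G a" and "K = conj_class G k" using vertex_elems K a k V_def by auto
    hence "k \<in> conj_class G a" using k by simp
    then obtain g where g: "g \<in> carrier G" "k = g \<otimes> a \<otimes> inv g" using conj_classD by blast
    thus "k \<in> A" using idx2.A_normal[OF I g(1) a(2)] by simp
  qed
  have relA: "comm_rel G K K' \<longleftrightarrow> (K \<in> VA \<longleftrightarrow> K' \<in> VA)" if K: "K \<in> V" and K': "K' \<in> V" for K K'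
  proof -
    obtain k where k: "k \<in> carrier G - grp_center G" "K = conj_class G k" using K V_def vertices_iff by blast
    obtain k' where k': "k' \<in> carrier G - grp_center G" "K' = conj_class G k'" using K' V_def vertices_iff by blast
    have kK: "k \<in> K" and kK': "k' \<in> K'" using k k' conj_class_self by auto
    show ?thesis
    proof (cases "K \<in> VA")
      case True note KA = this
      hence kA: "k \<in> A" using cls[OF K kK] by simp
      show ?thesis
      proof (cases "K' \<in> VA")
        case True
        hence "k' \<in> A" using cls[OF K' kK'] by simp
        hence "k \<otimes> k' = k' \<otimes> k" using idx2.A_comm[OF I kA] by simp
        thus ?thesis using kK kK' KA True unfolding comm_rel_def by blast
      next
        case False
        have "\<not> comm_rel G K K'"
        proof
          assume "comm_rel G K K'"
          then obtain a b where ab: "a \<in> K" "b \<in> K'" "a \<otimes> b = b \<otimes> a" unfolding comm_rel_def by blast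
          have aA: "a \<in> A" using cls[OF K ab(1)] KA by simp
          have bA: "b \<notin> A" using cls[OF K' ab(2)] False by simp
          have aZ: "a \<in> carrier G - grp_center G" using vertex_elems[of K a] K ab V_def by auto
          have bc: "b \<in> carrier G" using vertex_elems[of K' b] K' ab V_def by auto
          show False using idx2.A_out_noncomm[OF I, of a b] aA aZ bA bc ab(3) by simp
        qed
        thus ?thesis using KA False by simp
      qed
    next
      case False note KO = this
      hence kA: "k \<notin> A" using cls[OF K kK] by simp
      show ?thesis
      proof (cases "K' \<in> VA")
        case True
        have "\<not> comm_rel G K K'"
        proof
          assume "comm_rel G K K'"
          then obtain a b where ab: "a \<in> K" "b \<in> K'" "a \<otimes> b = b \<otimes> a" unfolding comm_rel_def by blast
          have aA: "a \<notin> A" using cls[OF K ab(1)] KO by simp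
          have bA: "b \<in> A" using cls[OF K' ab(2)] True by simp
          have bZ: "b \<in> carrier G - grp_center G" using vertex_elems[of K' b] K' ab V_def by auto
          have ac: "a \<in> carrier G" using vertex_elems[of K a] K ab V_def by auto
          show False using idx2.A_out_noncomm[OF I, of b a] aA bZ bA ac ab(3) by simp
        qed
        thus ?thesis using KO True by simp
      next
        case False
        have k'A: "k' \<notin> A" using cls[OF K' kK'] False by simp
        obtain c1 z1 where c1: "c1 \<in> carrier G" "z1 \<in> grp_center G" "c1 \<otimes> k \<otimes> inv c1 = x \<otimes> z1"
          using onet k kA by blast
        obtain c2 z2 where c2: "c2 \<in> carrier G" "z2 \<in> grp_center G" "c2 \<otimes> k' \<otimes> inv c2 = x \<otimes> z2"
          using onet k' k'A by blast
        have m1: "x \<otimes> z1 \<in> K" using conj_classI[OF c1(1), of k] k c1 by simp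
        have m2: "x \<otimes> z2 \<in> K'" using conj_classI[OF c2(1), of k'] k' c2 by simp
        have z1c: "z1 \<in> carrier G" and z2c: "z2 \<in> carrier G" using c1 c2 center_sub by auto
        have "(x \<otimes> z1) \<otimes> (x \<otimes> z2) = x \<otimes> (z1 \<otimes> x) \<otimes> z2" using x z1c z2c by (simp add: m_assoc)
        also have "\<dots> = x \<otimes> (x \<otimes> z1) \<otimes> z2" using centerD[OF c1(2) x] by simp
        also have "\<dots> = x \<otimes> x \<otimes> (z1 \<otimes> z2)" using x z1c z2c by (simp add: m_assoc)
        also have "\<dots> = x \<otimes> x \<otimes> (z2 \<otimes> z1)" using centerD[OF c1(2) z2c] by simp
        also have "\<dots> = x \<otimes> (x \<otimes> z2) \<otimes> z1" using x z1c z2c by (simp add: m_assoc)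
        also have "\<dots> = x \<otimes> (z2 \<otimes> x) \<otimes> z1" using centerD[OF c2(2) x] by simp
        also have "\<dots> = (x \<otimes> z2) \<otimes> (x \<otimes> z1)" using x z1c z2c by (simp add: m_assoc)
        finally have "comm_rel G K K'" using m1 m2 unfolding comm_rel_def by blast
        thus ?thesis using KO False by simp
      qed
    qed
  qed
  have yzA: "y \<otimes> z \<in> A" if "z \<in> grp_center G" for z
    using subgroup.m_closed[OF Asub yA] ZA that by blast
  have yzZ: "y \<otimes> z \<notin> grp_center G" if z: "z \<in> grp_center G" for z
  proof
    assume "y \<otimes> z \<in> grp_center G"
    hence "(y \<otimes> z) \<otimes> inv z \<in> grp_center G"
      using subgroup.m_closed[OF center_subgroup _ subgroup.m_inv_closed[OF center_subgroup z]] by simp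
    thus False using yZ y z center_sub by (auto simp: m_assoc)
  qed
  have bijf: "bij_betw (\<lambda>z. conj_class G (y \<otimes> z)) (grp_center G) VA"
  proof (rule bij_betw_imageI)
    show "inj_on (\<lambda>z. conj_class G (y \<otimes> z)) (grp_center G)"
    proof (rule inj_onI)
      fix z z' assume z: "z \<in> grp_center G" and z': "z' \<in> grp_center G"
        and eq: "conj_class G (y \<otimes> z) = conj_class G (y \<otimes> z')"
      have zc: "z \<in> carrier G" and z'c: "z' \<in> carrier G" using z z' center_sub by auto
      have "y \<otimes> z' \<in> conj_class G (y \<otimes> z)" using eq conj_class_self[of "y \<otimes> z'"] y z'c by simp
      then obtain c where c: "c \<in> carrier G" "y \<otimes> z' = c \<otimes> (y \<otimes> z) \<otimes> inv c" using conj_classD by blast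
      have "c \<otimes> (y \<otimes> z) \<otimes> inv c = c \<otimes> (z \<otimes> y) \<otimes> inv c" using centerD[OF z y] by simp
      also have "\<dots> = z \<otimes> (c \<otimes> y \<otimes> inv c)" using c(1) y zc centerD[OF z c(1)]
        by (simp add: m_assoc[symmetric])
      also have "\<dots> = (c \<otimes> y \<otimes> inv c) \<otimes> z" using centerD[OF z] c(1) y by simp
      finally have e: "y \<otimes> z' = (c \<otimes> y \<otimes> inv c) \<otimes> z" using c(2) by simp
      show "z = z'"
      proof (cases "c \<otimes> y \<otimes> inv c = y")
        case True thus ?thesis using e y zc z'c by simp
      next
        case False
        hence "y \<otimes> z' = inv y \<otimes> z" using e E2[OF c(1)] by auto
        hence "y \<otimes> (y \<otimes> z') = y \<otimes> (inv y \<otimes> z)" by simp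
        hence "y \<otimes> y \<otimes> z' = z" using y zc z'c by (simp add: m_assoc)
        hence "inv y \<otimes> z' = z" using iy by simp
        hence "inv y \<otimes> z' \<otimes> inv z' = z \<otimes> inv z'" by simp
        hence "inv y = z \<otimes> inv z'" using y z'c by (simp add: m_assoc)
        hence "inv y \<in> grp_center G"
          using subgroup.m_closed[OF center_subgroup z subgroup.m_inv_closed[OF center_subgroup z']] by simp
        hence "inv (inv y) \<in> grp_center G" using subgroup.m_inv_closed[OF center_subgroup] by blast
        thus ?thesis using yZ y by simp
      qed
    qed
    show "(\<lambda>z. conj_class G (y \<otimes> z)) ` grp_center G = VA"
    proof
      show "(\<lambda>z. conj_class G (y \<otimes> z)) ` grp_center G \<subseteq> VA"
      proof
        fix K assume "K \<in> (\<lambda>z. conj_class G (y \<otimes> z)) ` grp_center G"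
        then obtain z where z: "z \<in> grp_center G" "K = conj_class G (y \<otimes> z)" by blast
        have yzc: "y \<otimes> z \<in> carrier G" using y z center_sub by auto
        have "K \<in> V" unfolding V_def vertices_iff using z yzc yzZ[OF z(1)] by blast
        moreover have "y \<otimes> z \<in> K" using z conj_class_self[OF yzc] by simp
        ultimately show "K \<in> VA" unfolding VA_def using yzA[OF z(1)] by blast
      qed
      show "VA \<subseteq> (\<lambda>z. conj_class G (y \<otimes> z)) ` grp_center G"
      proof
        fix K assume KA: "K \<in> VA"
        hence K: "K \<in> V" using VA_def by simp
        obtain k where k: "k \<in> carrier G - grp_center G" "K = conj_class G k" using K V_def vertices_iff by blast
        have kA: "k \<in> A" using cls[OF K] k conj_class_self KA by auto
        obtain u z where u: "u \<in> U3" "z \<in> grp_center G" "k = u \<otimes> z" using AW kA W_def by blast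
        have zc: "z \<in> carrier G" using u center_sub by auto
        show "K \<in> (\<lambda>z. conj_class G (y \<otimes> z)) ` grp_center G"
        proof (cases "u = y")
          case True thus ?thesis using k u by blast
        next
          case False
          show ?thesis
          proof (cases "u = \<one>")
            case True thus ?thesis using k u zc by simp
          next
            case False
            hence uy: "u = inv y" using u(1) \<open>u \<noteq> y\<close> U3_def by auto
            have "x \<otimes> (inv y \<otimes> z) \<otimes> inv x = (x \<otimes> inv y \<otimes> inv x) \<otimes> z"
              using x y zc centerD[OF u(2) inv_closed[OF x]] by (simp add: m_assoc)
            hence "y \<otimes> z = x \<otimes> k \<otimes> inv x" using r1' u(3) uy by simp
            hence "y \<otimes> z \<in> conj_class G k" using conj_classI[OF x] by simp
            hence "conj_class G (y \<otimes> z) = K" using conj_class_eq k by simp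
            thus ?thesis using u(2) by blast
          qed
        qed
      qed
    qed
  qed
  have bijg: "bij_betw (\<lambda>z. conj_class G (x \<otimes> z)) (grp_center G) VO"
  proof (rule bij_betw_imageI)
    show "inj_on (\<lambda>z. conj_class G (x \<otimes> z)) (grp_center G)"
    proof (rule inj_onI)
      fix z z' assume z: "z \<in> grp_center G" and z': "z' \<in> grp_center G"
        and eq: "conj_class G (x \<otimes> z) = conj_class G (x \<otimes> z')"
      have zc: "z \<in> carrier G" and z'c: "z' \<in> carrier G" using z z' center_sub by auto
      have "x \<otimes> z' \<in> conj_class G (x \<otimes> z)" using eq conj_class_self[of "x \<otimes> z'"] x z'c by simp
      then obtain c where c: "c \<in> carrier G" "x \<otimes> z' = c \<otimes> (x \<otimes> z) \<otimes> inv c" using conj_classD by blast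
      have "c \<otimes> (x \<otimes> z) \<otimes> inv c = c \<otimes> (z \<otimes> x) \<otimes> inv c" using centerD[OF z x] by simp
      also have "\<dots> = z \<otimes> (c \<otimes> x \<otimes> inv c)" using c(1) x zc centerD[OF z c(1)]
        by (simp add: m_assoc[symmetric])
      also have "\<dots> = (c \<otimes> x \<otimes> inv c) \<otimes> z" using centerD[OF z] c(1) x by simp
      finally have e: "x \<otimes> z' = (c \<otimes> x \<otimes> inv c) \<otimes> z" using c(2) by simp
      hence "x \<otimes> z' \<otimes> inv z = c \<otimes> x \<otimes> inv c" using c(1) x zc by (simp add: m_assoc)
      hence "c \<otimes> x \<otimes> inv c = x \<otimes> (z' \<otimes> inv z)" using x zc z'c by (simp add: m_assoc)
      hence "z' \<otimes> inv z = \<one>"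
        using E4[OF c(1)] subgroup.m_closed[OF center_subgroup z' subgroup.m_inv_closed[OF center_subgroup z]] by blast
      thus "z = z'" using zc z'c by (metis inv_closed inv_inv inv_equality)
    qed
    show "(\<lambda>z. conj_class G (x \<otimes> z)) ` grp_center G = VO"
    proof
      show "(\<lambda>z. conj_class G (x \<otimes> z)) ` grp_center G \<subseteq> VO"
      proof
        fix K assume "K \<in> (\<lambda>z. conj_class G (x \<otimes> z)) ` grp_center G"
        then obtain z where z: "z \<in> grp_center G" "K = conj_class G (x \<otimes> z)" by blast
        have zc: "z \<in> carrier G" using z center_sub by auto
        have xzc: "x \<otimes> z \<in> carrier G" using x zc by simp
        have xzA: "x \<otimes> z \<notin> A"
        proof
          assume "x \<otimes> z \<in> A"
          hence "(x \<otimes> z) \<otimes> inv z \<in> A" using subgroup.m_closed[OF Asub _ subgroup.m_inv_closed[OF Asub]] ZA z by blast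
          thus False using xA x zc by (simp add: m_assoc)
        qed
        have "x \<otimes> z \<notin> grp_center G" using xzA ZA by blast
        hence KV: "K \<in> V" unfolding V_def vertices_iff using z xzc by blast
        moreover have "x \<otimes> z \<in> K" using z conj_class_self[OF xzc] by simp
        ultimately have "K \<notin> VA" using cls xzA by blast
        thus "K \<in> VO" using KV VO_def by simp
      qed
      show "VO \<subseteq> (\<lambda>z. conj_class G (x \<otimes> z)) ` grp_center G"
      proof
        fix K assume KO: "K \<in> VO"
        hence K: "K \<in> V" and KA: "K \<notin> VA" using VO_def by auto
        obtain k where k: "k \<in> carrier G - grp_center G" "K = conj_class G k" using K V_def vertices_iff by blast
        have kA: "k \<notin> A" using cls[OF K] k conj_class_self KA by auto
        obtain c z where c: "c \<in> carrier G" "z \<in> grp_center G" "c \<otimes> k \<otimes> inv c = x \<otimes> z" using onet k kA by blast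
        have "x \<otimes> z \<in> conj_class G k" using conj_classI[OF c(1), of k] c(3) by simp
        hence "conj_class G (x \<otimes> z) = K" using conj_class_eq k by simp
        thus "K \<in> (\<lambda>z. conj_class G (x \<otimes> z)) ` grp_center G" using c(2) by blast
      qed
    qed
  qed
  have cVA: "card VA = card (grp_center G)" using bij_betw_same_card[OF bijf] by simp
  have cVO: "card VO = card (grp_center G)" using bij_betw_same_card[OF bijg] by simp
  have MP: "mpart V (comm_rel G) (nccc_adj G)" using mpart_CA[OF fin idx2.CA[OF I]] V_def by simp
  have Pc: "card (mpart.P V (comm_rel G) K) = card (grp_center G)" if K: "K \<in> V" for K
  proof (cases "K \<in> VA")
    case True
    have "mpart.P V (comm_rel G) K = VA" unfolding mpart.P_def[OF MP] using relA[OF K] True VA_def by auto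
    thus ?thesis using cVA by simp
  next
    case False
    have "mpart.P V (comm_rel G) K = VO" unfolding mpart.P_def[OF MP] using relA[OF K] False VA_def VO_def by auto
    thus ?thesis using cVO by simp
  qed
  have "graph_integral V (nccc_adj G)" unfolding graph_integral_def using mpart.A_integral_eq[OF MP Pc] by simp
  moreover have "graph_Q_integral V (nccc_adj G)" unfolding graph_Q_integral_def using mpart.Q_integral_eq[OF MP Pc] by simp
  moreover have "graph_L_integral V (nccc_adj G)" unfolding graph_L_integral_def using mpart.L_integral[OF MP] by simp
  ultimately show ?thesis using V_def by simp
qed

end

context group
begin

lemma ZP_all:
  assumes nonab: "\<exists>x \<in> carrier G. \<exists>y \<in> carrier G. x \<otimes> y \<noteq> y \<otimes> x"
    and fin: "finite (carrier G)" and p: "Factorial_Ring.prime (p::nat)"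
    and iso: "G Mod (grp_center G) \<cong> DirProd (integer_mod_group p) (integer_mod_group p)"
  shows "graph_integral (nccc_vertices G) (nccc_adj G) \<and> graph_L_integral (nccc_vertices G) (nccc_adj G)
      \<and> graph_Q_integral (nccc_vertices G) (nccc_adj G)"
proof -
  define N where "N = grp_center G"
  define GZ where "GZ = G Mod N"
  define h where "h = (\<lambda>g. N #> g)"
  interpret H: group_hom G GZ h using quot_hom unfolding GZ_def h_def N_def .
  have NG: "subgroup N G" using center_subgroup N_def by simp
  have Ncar: "N \<subseteq> carrier G" using center_sub N_def by simp
  have finN: "finite N" using Ncar fin finite_subset by blast
  have p0: "p \<noteq> 0" and p2: "p \<ge> 2" using p prime_ge_2_nat by auto
  have carGZ: "carrier GZ = rcosets N" unfolding GZ_def FactGroup_def by simp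
  have finGZ: "finite (carrier GZ)" unfolding GZ_def carrier_FactGroup using fin by simp
  have cGZ: "card (carrier GZ) = p * p"
  proof -
    have "card (carrier GZ) = card (carrier (DirProd (integer_mod_group p) (integer_mod_group p)))"
      using iso_same_card[OF iso] GZ_def N_def by simp
    also have "\<dots> = p * p" using p0 by (simp add: carrier_integer_mod_group card_cartesian_product)
    finally show ?thesis .
  qed
  obtain \<phi> where phi: "\<phi> \<in> iso GZ (DirProd (integer_mod_group p) (integer_mod_group p))"
    using iso unfolding is_iso_def GZ_def N_def by blast
  have comm: "X1 \<otimes>\<^bsub>GZ\<^esub> Y1 = Y1 \<otimes>\<^bsub>GZ\<^esub> X1" if X1: "X1 \<in> carrier GZ" and Y1: "Y1 \<in> carrier GZ" for X1 Y1
  proof -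
    have hom: "\<phi> \<in> hom GZ (DirProd (integer_mod_group p) (integer_mod_group p))" using phi iso_def by blast
    have inj: "inj_on \<phi> (carrier GZ)" using phi unfolding iso_def bij_betw_def by blast
    have cl: "\<phi> A \<in> carrier (DirProd (integer_mod_group p) (integer_mod_group p))" if "A \<in> carrier GZ" for A
      using hom that unfolding hom_def by blast
    obtain a1 a2 where a: "\<phi> X1 = (a1, a2)" by fastforce
    obtain b1 b2 where b: "\<phi> Y1 = (b1, b2)" by fastforce
    have "\<phi> (X1 \<otimes>\<^bsub>GZ\<^esub> Y1) = \<phi> X1 \<otimes>\<^bsub>DirProd (integer_mod_group p) (integer_mod_group p)\<^esub> \<phi> Y1"
      using hom X1 Y1 unfolding hom_def by blast
    also have "\<dots> = \<phi> Y1 \<otimes>\<^bsub>DirProd (integer_mod_group p) (integer_mod_group p)\<^esub> \<phi> X1"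
      using a b by (simp add: add.commute)
    also have "\<dots> = \<phi> (Y1 \<otimes>\<^bsub>GZ\<^esub> X1)" using hom X1 Y1 unfolding hom_def by simp
    finally show ?thesis using inj X1 Y1 inj_onD by (metis H.H.m_closed)
  qed
  have coset_eq: "g \<in> N #> c" if "h g = h c" "g \<in> carrier G" for g c
    using rcos_self[OF that(2) NG] that(1) h_def by simp
  have conjN: "\<exists>n\<in>N. c \<otimes> g \<otimes> inv c = n \<otimes> g" if c: "c \<in> carrier G" and g: "g \<in> carrier G" for c g
  proof -
    have "h (c \<otimes> g \<otimes> inv c) = h c \<otimes>\<^bsub>GZ\<^esub> h g \<otimes>\<^bsub>GZ\<^esub> inv\<^bsub>GZ\<^esub> (h c)" using c g by simp
    also have "\<dots> = h g \<otimes>\<^bsub>GZ\<^esub> h c \<otimes>\<^bsub>GZ\<^esub> inv\<^bsub>GZ\<^esub> (h c)" using comm[of "h c" "h g"] c g by simp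
    also have "\<dots> = h g" using c g by (simp add: H.H.m_assoc)
    finally have "c \<otimes> g \<otimes> inv c \<in> N #> g" using coset_eq c g by simp
    thus ?thesis unfolding r_coset_def by blast
  qed
  define cent where "cent x = {g \<in> carrier G. g \<otimes> x = x \<otimes> g}" for x
  define Qx where "Qx x = h ` cent x" for x
  have centsub: "x \<in> carrier G \<Longrightarrow> subgroup (cent x) G" for x unfolding cent_def by (rule cent_subgroup)
  have Qsub: "x \<in> carrier G \<Longrightarrow> subgroup (Qx x) GZ" for x
    unfolding Qx_def by (rule H.subgroup_img_is_subgroup[OF centsub])
  have memQ: "g \<in> cent x" if x: "x \<in> carrier G" and g: "g \<in> carrier G" and hg: "h g \<in> Qx x" for x g
  proof -
    obtain c where c: "c \<in> cent x" "h g = h c" using hg Qx_def by blast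
    have cc: "c \<in> carrier G" and cx: "c \<otimes> x = x \<otimes> c" using c cent_def by auto
    obtain n where n: "n \<in> N" "g = n \<otimes> c" using coset_eq[OF c(2) g] unfolding r_coset_def by blast
    have nc: "n \<in> carrier G" using n Ncar by auto
    have "g \<otimes> x = n \<otimes> (x \<otimes> c)" using n cc x nc cx by (simp add: m_assoc)
    also have "\<dots> = (n \<otimes> x) \<otimes> c" using nc x cc by (simp add: m_assoc)
    also have "\<dots> = x \<otimes> g" using centerD[of n x] n N_def x nc cc by (simp add: m_assoc)
    finally show ?thesis using g cent_def by simp
  qed
  have hone: "h \<one> = N" unfolding h_def using coset_join2[OF one_closed NG subgroup.one_closed[OF NG]] .
  have hneq: "h x \<noteq> h \<one>" if x: "x \<in> carrier G - N" for x
  proof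
    assume "h x = h \<one>"
    hence "x \<in> N #> \<one>" using coset_eq x by simp
    thus False using x coset_join2[OF one_closed NG subgroup.one_closed[OF NG]] by simp
  qed
  have cardcent: "card (cent x) = card (Qx x) * card N" if x: "x \<in> carrier G" for x
  proof -
    have Qr: "Qx x \<subseteq> rcosets N" unfolding Qx_def h_def cent_def using rcosetsI[OF Ncar] by blast
    have U: "\<Union> (Qx x) = cent x"
    proof
      show "\<Union> (Qx x) \<subseteq> cent x"
      proof
        fix g assume "g \<in> \<Union> (Qx x)"
        then obtain c where c: "c \<in> cent x" "g \<in> N #> c" unfolding Qx_def h_def by blast
        obtain n where n: "n \<in> N" "g = n \<otimes> c" using c(2) unfolding r_coset_def by blast
        have cc: "c \<in> carrier G" and nc: "n \<in> carrier G" using c n Ncar cent_def by auto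
        have "h g = h c" using n cc nc unfolding h_def
          using repr_independence[OF c(2) cc NG] by simp
        moreover have "g \<in> carrier G" using n cc nc by simp
        moreover have "h c \<in> Qx x" using c Qx_def by blast
        ultimately show "g \<in> cent x" using memQ[OF x] by simp
      qed
      show "cent x \<subseteq> \<Union> (Qx x)"
      proof
        fix g assume g: "g \<in> cent x"
        hence "g \<in> N #> g" using rcos_self[OF _ NG] cent_def by simp
        thus "g \<in> \<Union> (Qx x)" using g unfolding Qx_def h_def by blast
      qed
    qed
    have "card N * card (Qx x) = card (\<Union> (Qx x))"
    proof (rule card_partition)
      show "finite (Qx x)" using Qr finGZ carGZ finite_subset by metis
      show "finite (\<Union> (Qx x))" using U fin cent_def by simp
      show "\<And>c. c \<in> Qx x \<Longrightarrow> card c = card N" using Qr card_rcosets_equal[OF _ Ncar] by auto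
      show "\<And>c1 c2. c1 \<in> Qx x \<Longrightarrow> c2 \<in> Qx x \<Longrightarrow> c1 \<noteq> c2 \<Longrightarrow> c1 \<inter> c2 = {}"
        using rcos_disjoint[OF NG] Qr unfolding pairwise_def disjnt_def by blast
    qed
    thus ?thesis using U by (simp add: mult.commute)
  qed
  have GZgrp: "group GZ" by (rule H.H.is_group)
  have dvdp: "card K = 1 \<or> card K = p \<or> card K = p * p" if K: "subgroup K GZ" for K
  proof -
    have "card (rcosets\<^bsub>GZ\<^esub> K) * card K = order GZ" by (rule group.lagrange[OF GZgrp K])
    hence "card K dvd p ^ 2" using cGZ unfolding order_def by (metis dvd_triv_right power2_eq_square)
    then obtain i where "i \<le> 2" "card K = p ^ i" using divides_primepow_nat[OF p] by blast
    thus ?thesis by (cases i) (auto simp: numeral_2_eq_2 le_Suc_eq)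
  qed
  have finK: "finite K" if "subgroup K GZ" for K using that subgroup.subset finGZ finite_subset by blast
  have cardQ: "card (Qx x) = p" if x: "x \<in> carrier G - N" for x
  proof -
    have xc: "x \<in> carrier G" using x by simp
    have Qs: "subgroup (Qx x) GZ" by (rule Qsub[OF xc])
    have "x \<in> cent x" "\<one> \<in> cent x" unfolding cent_def using xc by auto
    hence "h x \<in> Qx x" "h \<one> \<in> Qx x" unfolding Qx_def by (blast intro: imageI)+
    hence "{h x, h \<one>} \<subseteq> Qx x" by simp
    hence "card {h x, h \<one>} \<le> card (Qx x)" using card_mono finK[OF Qs] by blast
    hence ge2: "card (Qx x) \<ge> 2" using hneq[OF x] by simp
    have "card (Qx x) \<noteq> p * p"
    proof
      assume "card (Qx x) = p * p"
      hence "Qx x = carrier GZ" using card_subset_eq[OF finGZ subgroup.subset[OF Qs]] cGZ by simp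
      hence "g \<in> cent x" if "g \<in> carrier G" for g using memQ[OF xc that] that by simp
      hence "x \<in> grp_center G" using xc unfolding cent_def by (intro centerI) auto
      thus False using x N_def by simp
    qed
    thus ?thesis using dvdp[OF Qs] ge2 by auto
  qed
  have sub_eq: "K1 = K2" if K1: "subgroup K1 GZ" and K2: "subgroup K2 GZ" and sub: "K1 \<subseteq> K2"
    and c2: "card K2 = p" and c1: "card K1 \<ge> 2" for K1 K2
  proof -
    have "card K1 \<le> p" using card_mono[OF finK[OF K2] sub] c2 by simp
    moreover have "p < p * p" using p2 by simp
    ultimately have "card K1 = p" using dvdp[OF K1] c1 by auto
    thus ?thesis using card_subset_eq[OF finK[OF K2] sub] c2 by simp
  qed
  have Qeq: "Qx u = Qx v" if u: "u \<in> carrier G - N" and v: "v \<in> carrier G - N" and uv: "u \<otimes> v = v \<otimes> u" for u v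
  proof -
    have uc: "u \<in> carrier G" and vc: "v \<in> carrier G" using u v by auto
    define I where "I = Qx u \<inter> Qx v"
    have Is: "subgroup I GZ" unfolding I_def by (rule group.subgroups_Inter_pair[OF GZgrp Qsub[OF uc] Qsub[OF vc]])
    have "v \<in> cent u" "\<one> \<in> cent u" "v \<in> cent v" "\<one> \<in> cent v" unfolding cent_def using uc vc uv by auto
    hence "h v \<in> I" "h \<one> \<in> I" unfolding I_def Qx_def by (blast intro: imageI)+
    hence "{h v, h \<one>} \<subseteq> I" by simp
    hence "card {h v, h \<one>} \<le> card I" using card_mono finK[OF Is] by blast
    hence ge2: "card I \<ge> 2" using hneq[OF v] by simp
    have "I = Qx u" using sub_eq[OF Is Qsub[OF uc] _ cardQ[OF u] ge2] I_def by blast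
    moreover have "I = Qx v" using sub_eq[OF Is Qsub[OF vc] _ cardQ[OF v] ge2] I_def by blast
    ultimately show ?thesis by simp
  qed
  have ca: "CA G"
    unfolding CA_def
  proof (intro ballI impI)
    fix u v w assume u: "u \<in> carrier G - grp_center G" and v: "v \<in> carrier G - grp_center G"
      and w: "w \<in> carrier G - grp_center G" and uv: "u \<otimes> v = v \<otimes> u" and vw: "v \<otimes> w = w \<otimes> v"
    have u': "u \<in> carrier G - N" and v': "v \<in> carrier G - N" and w': "w \<in> carrier G - N"
      using u v w N_def by auto
    have "Qx u = Qx v" by (rule Qeq[OF u' v' uv])
    also have "\<dots> = Qx w" by (rule Qeq[OF v' w' vw])
    finally have QQ: "Qx u = Qx w" .
    have "w \<in> cent w" using w' unfolding cent_def by simp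
    hence "h w \<in> Qx w" unfolding Qx_def by (rule imageI)
    hence "h w \<in> Qx u" using QQ by simp
    hence "w \<in> cent u" using memQ[of u w] u' w' by simp
    thus "u \<otimes> w = w \<otimes> u" unfolding cent_def by simp
  qed
  have cent_conj: "cent (c \<otimes> x \<otimes> inv c) = cent x" if c: "c \<in> carrier G" and x: "x \<in> carrier G" for c x
  proof -
    obtain n where n: "n \<in> N" "c \<otimes> x \<otimes> inv c = n \<otimes> x" using conjN[OF c x] by blast
    have nc: "n \<in> carrier G" using n Ncar by auto
    have "g \<otimes> (n \<otimes> x) = (n \<otimes> x) \<otimes> g \<longleftrightarrow> g \<otimes> x = x \<otimes> g" if g: "g \<in> carrier G" for g
    proof -
      have "g \<otimes> (n \<otimes> x) = n \<otimes> (g \<otimes> x)" using centerD[of n g] n N_def g nc x by (simp add: m_assoc[symmetric])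
      moreover have "(n \<otimes> x) \<otimes> g = n \<otimes> (x \<otimes> g)" using nc x g by (simp add: m_assoc)
      ultimately show ?thesis using nc g x by simp
    qed
    thus ?thesis unfolding cent_def using n(2) by auto
  qed
  have ordG: "order G = p * p * card N"
    using lagrange[OF NG] cGZ carGZ by simp
  have cardcls: "card (conj_class G w) = p" if w: "w \<in> carrier G - N" for w
  proof -
    have wc: "w \<in> carrier G" using w by simp
    have ga: "group_action G (carrier G) (\<lambda>g. \<lambda>h\<in>carrier G. g \<otimes> h \<otimes> inv g)" by (rule action_by_conjugation)
    have orb: "orbit G (\<lambda>g. \<lambda>h\<in>carrier G. g \<otimes> h \<otimes> inv g) w = conj_class G w"
      unfolding orbit_def conj_class_def using wc by auto
    have stab: "stabilizer G (\<lambda>g. \<lambda>h\<in>carrier G. g \<otimes> h \<otimes> inv g) w = cent w"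
    proof -
      have "g \<otimes> w \<otimes> inv g = w \<longleftrightarrow> g \<otimes> w = w \<otimes> g" if g: "g \<in> carrier G" for g
      proof
        assume "g \<otimes> w \<otimes> inv g = w"
        hence "g \<otimes> w \<otimes> inv g \<otimes> g = w \<otimes> g" by simp
        thus "g \<otimes> w = w \<otimes> g" using g wc by (simp add: m_assoc)
      next
        assume "g \<otimes> w = w \<otimes> g"
        thus "g \<otimes> w \<otimes> inv g = w" using g wc by (simp add: m_assoc)
      qed
      thus ?thesis unfolding stabilizer_def cent_def using wc by auto
    qed
    have "card (conj_class G w) * card (cent w) = order G"
      using group_action.orbit_stabilizer_theorem[OF ga wc] orb stab by simp
    hence "card (conj_class G w) * (p * card N) = p * (p * card N)"
      using cardcent[OF wc] cardQ[OF w] ordG by (simp add: mult.commute mult.left_commute)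
    moreover have "p * card N > 0" using p0 finN subgroup.one_closed[OF NG] card_gt_0_iff by auto
    ultimately show ?thesis by simp
  qed
  define V where "V = nccc_vertices G"
  have MP: "mpart V (comm_rel G) (nccc_adj G)" using mpart_CA[OF fin ca] V_def by simp
  define s where "s = (p * card N - card N) div p"
  have Pc: "card (mpart.P V (comm_rel G) K) = s" if K: "K \<in> V" for K
  proof -
    obtain x where x: "x \<in> carrier G - N" and Kx: "K = conj_class G x" using K V_def vertices_iff N_def by blast
    have xc: "x \<in> carrier G" using x by simp
    have PK: "mpart.P V (comm_rel G) K = conj_class G ` (cent x - N)"
    proof
      show "mpart.P V (comm_rel G) K \<subseteq> conj_class G ` (cent x - N)"
      proof
        fix K' assume "K' \<in> mpart.P V (comm_rel G) K"
        hence K': "K' \<in> V" and cr: "comm_rel G K K'" unfolding mpart.P_def[OF MP] by auto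
        obtain a b where ab: "a \<in> K" "b \<in> K'" "a \<otimes> b = b \<otimes> a" using cr unfolding comm_rel_def by blast
        have bK: "b \<in> carrier G - N" "K' = conj_class G b" using vertex_elems[of K' b] K' ab V_def N_def by auto
        obtain c where c: "c \<in> carrier G" "a = c \<otimes> x \<otimes> inv c" using ab(1) Kx conj_classD by blast
        have "b \<in> cent a" unfolding cent_def using bK ab(3) by simp
        hence "b \<in> cent x" using cent_conj[OF c(1) xc] c(2) by simp
        thus "K' \<in> conj_class G ` (cent x - N)" using bK by blast
      qed
      show "conj_class G ` (cent x - N) \<subseteq> mpart.P V (comm_rel G) K"
      proof
        fix K' assume "K' \<in> conj_class G ` (cent x - N)"
        then obtain w where w: "w \<in> cent x" "w \<notin> N" "K' = conj_class G w" by blast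
        have wc: "w \<in> carrier G" and wx: "w \<otimes> x = x \<otimes> w" using w cent_def by auto
        have K'V: "K' \<in> V" unfolding V_def vertices_iff using w wc N_def by blast
        have "comm_rel G K K'" unfolding comm_rel_def
          using conj_class_self[OF xc] conj_class_self[OF wc] Kx w(3) wx by metis
        thus "K' \<in> mpart.P V (comm_rel G) K" unfolding mpart.P_def[OF MP] using K'V by simp
      qed
    qed
    have UP: "\<Union> (conj_class G ` (cent x - N)) = cent x - N"
    proof
      show "\<Union> (conj_class G ` (cent x - N)) \<subseteq> cent x - N"
      proof
        fix e assume "e \<in> \<Union> (conj_class G ` (cent x - N))"
        then obtain w where w: "w \<in> cent x" "w \<notin> N" "e \<in> conj_class G w" by blast
        have wc: "w \<in> carrier G" and wx: "w \<otimes> x = x \<otimes> w" using w cent_def by auto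
        obtain c where c: "c \<in> carrier G" "e = c \<otimes> w \<otimes> inv c" using w(3) conj_classD by blast
        have eN: "e \<in> carrier G - N" using conj_noncentral[of w c] wc w(2) c N_def by simp
        obtain n where n: "n \<in> N" "e = n \<otimes> w" using conjN[OF c(1) wc] c(2) by auto
        have nc: "n \<in> carrier G" using n Ncar by auto
        have "e \<otimes> x = n \<otimes> (x \<otimes> w)" using n wx nc wc xc by (simp add: m_assoc)
        also have "\<dots> = (n \<otimes> x) \<otimes> w" using nc xc wc by (simp add: m_assoc)
        also have "\<dots> = x \<otimes> e" using centerD[of n x] n N_def xc nc wc by (simp add: m_assoc)
        finally show "e \<in> cent x - N" using eN cent_def by simp
      qed
      show "cent x - N \<subseteq> \<Union> (conj_class G ` (cent x - N))"
      proof
        fix w assume w: "w \<in> cent x - N"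
        hence "w \<in> conj_class G w" using conj_class_self cent_def by simp
        thus "w \<in> \<Union> (conj_class G ` (cent x - N))" using w by blast
      qed
    qed
    have fc: "finite (cent x)" using fin cent_def by simp
    have "p * card (conj_class G ` (cent x - N)) = card (\<Union> (conj_class G ` (cent x - N)))"
    proof (rule card_partition)
      show "finite (conj_class G ` (cent x - N))" using fc by simp
      show "finite (\<Union> (conj_class G ` (cent x - N)))" using UP fc by simp
      show "\<And>c. c \<in> conj_class G ` (cent x - N) \<Longrightarrow> card c = p"
      proof -
        fix c assume "c \<in> conj_class G ` (cent x - N)"
        then obtain w where w: "w \<in> cent x - N" "c = conj_class G w" by blast
        have "w \<in> carrier G - N" using w(1) unfolding cent_def by simp
        thus "card c = p" using cardcls w(2) by simp
      qed
      show "\<And>c1 c2. c1 \<in> conj_class G ` (cent x - N) \<Longrightarrow> c2 \<in> conj_class G ` (cent x - N) \<Longrightarrow> c1 \<noteq> c2 \<Longrightarrow> c1 \<inter> c2 = {}"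
      proof -
        fix c1 c2 assume c1: "c1 \<in> conj_class G ` (cent x - N)" and c2: "c2 \<in> conj_class G ` (cent x - N)"
          and ne: "c1 \<noteq> c2"
        obtain w1 where w1: "w1 \<in> carrier G" "c1 = conj_class G w1" using c1 cent_def by blast
        obtain w2 where w2: "w2 \<in> carrier G" "c2 = conj_class G w2" using c2 cent_def by blast
        show "c1 \<inter> c2 = {}"
        proof (rule ccontr)
          assume "c1 \<inter> c2 \<noteq> {}"
          then obtain e where "e \<in> conj_class G w1" "e \<in> conj_class G w2" using w1 w2 by blast
          hence "conj_class G e = conj_class G w1" "conj_class G e = conj_class G w2"
            using conj_class_eq[of w1 e] conj_class_eq[of w2 e] w1 w2 by auto
          thus False using ne w1 w2 by simp
        qed
      qed
    qed
    hence "p * card (mpart.P V (comm_rel G) K) = card (cent x - N)" using PK UP by simp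
    also have "\<dots> = card (cent x) - card N"
    proof -
      have "N \<subseteq> cent x" unfolding cent_def using Ncar centerD N_def xc by auto
      thus ?thesis by (rule card_Diff_subset[OF finN])
    qed
    also have "\<dots> = p * card N - card N" using cardcent[OF xc] cardQ[OF x] by (simp add: mult.commute)
    finally have eqp: "p * card (mpart.P V (comm_rel G) K) = p * card N - card N" .
    have "card (mpart.P V (comm_rel G) K) = (p * card (mpart.P V (comm_rel G) K)) div p" using p0 by simp
    thus ?thesis unfolding s_def using eqp by simp
  qed
  have "graph_integral V (nccc_adj G)" unfolding graph_integral_def using mpart.A_integral_eq[OF MP Pc] by simp
  moreover have "graph_Q_integral V (nccc_adj G)" unfolding graph_Q_integral_def using mpart.Q_integral_eq[OF MP Pc] by simp
  moreover have "graph_L_integral V (nccc_adj G)" unfolding graph_L_integral_def using mpart.L_integral[OF MP] by simp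
  ultimately show ?thesis using V_def by simp
qed

end

context group
begin

lemma main_aux:
  assumes fin: "finite (carrier G)"
    and nonab: "\<exists>x \<in> carrier G. \<exists>y \<in> carrier G. x \<otimes> y \<noteq> y \<otimes> x"
  shows
   "(((\<exists>p::nat. Factorial_Ring.prime p \<and>
        G Mod (grp_center G) \<cong> DirProd (integer_mod_group p) (integer_mod_group p))
     \<or> (\<exists>m\<ge>2. iso_U6 G m))
    \<longrightarrow> graph_integral (nccc_vertices G) (nccc_adj G)
      \<and> graph_L_integral (nccc_vertices G) (nccc_adj G)
      \<and> graph_Q_integral (nccc_vertices G) (nccc_adj G))
  \<and>
   (((\<exists>m\<ge>3. iso_D G m) \<or> (\<exists>m\<ge>2. iso_T G m) \<or> (\<exists>m\<ge>2. iso_SD G m)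
     \<or> (\<exists>n m. m \<ge> 3 \<and> n \<ge> 2 \<and> iso_U G n m) \<or> (\<exists>m\<ge>2. iso_V G m)
     \<or> (\<exists>m\<ge>3. iso_D (G Mod (grp_center G)) m))
    \<longrightarrow> graph_L_integral (nccc_vertices G) (nccc_adj G))
  \<and>
   ((\<exists>m. m \<ge> 3 \<and> odd m \<and>
        (iso_D G m \<or> iso_T G m \<or> iso_SD G m \<or> (\<exists>n\<ge>2. iso_U G n m)))
    \<longrightarrow> graph_Q_integral (nccc_vertices G) (nccc_adj G))
  \<and>
   ((\<exists>m. even m \<and> odd (m div 2) \<and> (iso_D G m \<or> (\<exists>n\<ge>2. iso_U G n m)))
    \<longrightarrow> graph_Q_integral (nccc_vertices G) (nccc_adj G))"
proof -
  have L_of: "graph_L_integral (nccc_vertices G) (nccc_adj G)" if "\<exists>A. idx2 G A" for dummy :: bool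
    using that idx2.L_int[OF _ fin] by blast
  have P1: "((\<exists>p::nat. Factorial_Ring.prime p \<and>
        G Mod (grp_center G) \<cong> DirProd (integer_mod_group p) (integer_mod_group p))
     \<or> (\<exists>m\<ge>2. iso_U6 G m))
    \<longrightarrow> graph_integral (nccc_vertices G) (nccc_adj G)
      \<and> graph_L_integral (nccc_vertices G) (nccc_adj G)
      \<and> graph_Q_integral (nccc_vertices G) (nccc_adj G)"
  proof
    assume "(\<exists>p::nat. Factorial_Ring.prime p \<and>
        G Mod (grp_center G) \<cong> DirProd (integer_mod_group p) (integer_mod_group p))
     \<or> (\<exists>m\<ge>2. iso_U6 G m)"
    thus "graph_integral (nccc_vertices G) (nccc_adj G)
      \<and> graph_L_integral (nccc_vertices G) (nccc_adj G)
      \<and> graph_Q_integral (nccc_vertices G) (nccc_adj G)"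
    proof
      assume "\<exists>p::nat. Factorial_Ring.prime p \<and>
        G Mod (grp_center G) \<cong> DirProd (integer_mod_group p) (integer_mod_group p)"
      then obtain p :: nat where p: "Factorial_Ring.prime p"
        and i: "G Mod (grp_center G) \<cong> DirProd (integer_mod_group p) (integer_mod_group p)" by blast
      show ?thesis by (rule ZP_all[OF nonab fin p i])
    next
      assume "\<exists>m\<ge>2. iso_U6 G m"
      then obtain m where "iso_U6 G m" by blast
      thus ?thesis by (rule U6_all[OF nonab _ fin])
    qed
  qed
  have P2: "((\<exists>m\<ge>3. iso_D G m) \<or> (\<exists>m\<ge>2. iso_T G m) \<or> (\<exists>m\<ge>2. iso_SD G m)
     \<or> (\<exists>n m. m \<ge> 3 \<and> n \<ge> 2 \<and> iso_U G n m) \<or> (\<exists>m\<ge>2. iso_V G m)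
     \<or> (\<exists>m\<ge>3. iso_D (G Mod (grp_center G)) m))
    \<longrightarrow> graph_L_integral (nccc_vertices G) (nccc_adj G)"
  proof (intro impI)
    assume H: "(\<exists>m\<ge>3. iso_D G m) \<or> (\<exists>m\<ge>2. iso_T G m) \<or> (\<exists>m\<ge>2. iso_SD G m)
     \<or> (\<exists>n m. m \<ge> 3 \<and> n \<ge> 2 \<and> iso_U G n m) \<or> (\<exists>m\<ge>2. iso_V G m)
     \<or> (\<exists>m\<ge>3. iso_D (G Mod (grp_center G)) m)"
    have "\<exists>A. idx2 G A"
    proof -
      { assume "\<exists>m\<ge>3. iso_D G m"
        then obtain m where "iso_D G m" by blast
        hence ?thesis using D_setup[OF nonab] by blast }
      moreover
      { assume "\<exists>m\<ge>2. iso_T G m"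
        then obtain m where "iso_T G m" by blast
        hence ?thesis using T_setup[OF nonab] by blast }
      moreover
      { assume "\<exists>m\<ge>2. iso_SD G m"
        then obtain m where "iso_SD G m" by blast
        hence ?thesis using SD_setup[OF nonab] by blast }
      moreover
      { assume "\<exists>n m. m \<ge> 3 \<and> n \<ge> 2 \<and> iso_U G n m"
        then obtain n m where "iso_U G n m" by blast
        then obtain x y where x: "x \<in> carrier G" and y: "y \<in> carrier G" and gen: "generate G {x, y} = carrier G"
          and R: "U_rel n m G x y" unfolding iso_U_def presented2_def by blast
        have r: "inv x \<otimes> y \<otimes> x = inv y" using R unfolding U_rel_def by simp
        have ?thesis using U_struct[OF nonab x y gen r] by blast }
      moreover
      { assume "\<exists>m\<ge>2. iso_V G m"
        then obtain m where "iso_V G m" by blast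
        hence ?thesis using V_setup[OF nonab] by blast }
      moreover
      { assume "\<exists>m\<ge>3. iso_D (G Mod (grp_center G)) m"
        then obtain m where "iso_D (G Mod (grp_center G)) m" by blast
        hence ?thesis using QD_setup[OF nonab] by blast }
      ultimately show ?thesis using H by blast
    qed
    thus "graph_L_integral (nccc_vertices G) (nccc_adj G)" by (rule L_of)
  qed
  have P3: "(\<exists>m. m \<ge> 3 \<and> odd m \<and>
        (iso_D G m \<or> iso_T G m \<or> iso_SD G m \<or> (\<exists>n\<ge>2. iso_U G n m)))
    \<longrightarrow> graph_Q_integral (nccc_vertices G) (nccc_adj G)"
  proof (intro impI)
    assume "\<exists>m. m \<ge> 3 \<and> odd m \<and>
        (iso_D G m \<or> iso_T G m \<or> iso_SD G m \<or> (\<exists>n\<ge>2. iso_U G n m))"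
    then obtain m where m3: "m \<ge> 3" and om: "odd m"
      and H: "iso_D G m \<or> iso_T G m \<or> iso_SD G m \<or> (\<exists>n\<ge>2. iso_U G n m)" by blast
    have mc: "odd m \<or> (even m \<and> odd (m div 2))" using om by simp
    show "graph_Q_integral (nccc_vertices G) (nccc_adj G)"
    proof -
      { assume "iso_D G m" hence ?thesis by (rule D_Q[OF nonab _ fin mc]) }
      moreover
      { assume "iso_T G m" hence ?thesis by (rule T_Q[OF nonab _ fin om]) }
      moreover
      { assume "iso_SD G m" hence ?thesis by (rule SD_Q[OF nonab _ fin om m3]) }
      moreover
      { assume "\<exists>n\<ge>2. iso_U G n m"
        then obtain n where "iso_U G n m" by blast
        hence ?thesis by (rule U_Q[OF nonab _ fin mc]) }
      ultimately show ?thesis using H by blast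
    qed
  qed
  have P4: "(\<exists>m. even m \<and> odd (m div 2) \<and> (iso_D G m \<or> (\<exists>n\<ge>2. iso_U G n m)))
    \<longrightarrow> graph_Q_integral (nccc_vertices G) (nccc_adj G)"
  proof (intro impI)
    assume "\<exists>m. even m \<and> odd (m div 2) \<and> (iso_D G m \<or> (\<exists>n\<ge>2. iso_U G n m))"
    then obtain m where em: "even m" and om: "odd (m div 2)"
      and H: "iso_D G m \<or> (\<exists>n\<ge>2. iso_U G n m)" by blast
    have mc: "odd m \<or> (even m \<and> odd (m div 2))" using em om by simp
    show "graph_Q_integral (nccc_vertices G) (nccc_adj G)"
    proof -
      { assume "iso_D G m" hence ?thesis by (rule D_Q[OF nonab _ fin mc]) }
      moreover
      { assume "\<exists>n\<ge>2. iso_U G n m"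
        then obtain n where "iso_U G n m" by blast
        hence ?thesis by (rule U_Q[OF nonab _ fin mc]) }
      ultimately show ?thesis using H by blast
    qed
  qed
  show ?thesis using P1 P2 P3 P4 by blast
qed

end

theorem theorem3p2:
  fixes G :: "('a, 'b) monoid_scheme"
  assumes "group G" and "finite (carrier G)"
    and "\<exists>x \<in> carrier G. \<exists>y \<in> carrier G. x \<otimes>\<^bsub>G\<^esub> y \<noteq> y \<otimes>\<^bsub>G\<^esub> x"
  shows
   "(((\<exists>p::nat. Factorial_Ring.prime p \<and>
        G Mod (grp_center G) \<cong> DirProd (integer_mod_group p) (integer_mod_group p))
     \<or> (\<exists>m\<ge>2. iso_U6 G m))
    \<longrightarrow> graph_integral (nccc_vertices G) (nccc_adj G)
      \<and> graph_L_integral (nccc_vertices G) (nccc_adj G)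
      \<and> graph_Q_integral (nccc_vertices G) (nccc_adj G))
  \<and>
   (((\<exists>m\<ge>3. iso_D G m) \<or> (\<exists>m\<ge>2. iso_T G m) \<or> (\<exists>m\<ge>2. iso_SD G m)
     \<or> (\<exists>n m. m \<ge> 3 \<and> n \<ge> 2 \<and> iso_U G n m) \<or> (\<exists>m\<ge>2. iso_V G m)
     \<or> (\<exists>m\<ge>3. iso_D (G Mod (grp_center G)) m))
    \<longrightarrow> graph_L_integral (nccc_vertices G) (nccc_adj G))
  \<and>
   ((\<exists>m. m \<ge> 3 \<and> odd m \<and>
        (iso_D G m \<or> iso_T G m \<or> iso_SD G m \<or> (\<exists>n\<ge>2. iso_U G n m)))
    \<longrightarrow> graph_Q_integral (nccc_vertices G) (nccc_adj G))
  \<and>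
   ((\<exists>m. even m \<and> odd (m div 2) \<and> (iso_D G m \<or> (\<exists>n\<ge>2. iso_U G n m)))
    \<longrightarrow> graph_Q_integral (nccc_vertices G) (nccc_adj G))"
  using group.main_aux[OF assms(1) assms(2) assms(3)] .

end
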